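(* Let $L$ be an infinite set and consider the edgeless cube $Q_L$. Let $f$ be a legal configuration accessible from $f_{\mathrm{solved}}$ and let $C$ be a non-center cluster, whose unique representative in the quadrant $D$ is $(\alpha,\beta,+\infty)$ with $\alpha\in L$, $\beta\in\{0\}\cup L$. Then there is a finite basic sequence $s$ such that, if $g$ is the terminal configuration of $s$ applied to $f$, then $g(c)=f_{\mathrm{solved}}(c)$ for all $c\in C$ and $g(c)=f(c)$ for all cells $c\notin C$. Moreover, $s$ uses only face twists and basic twists of the form $T_{i,\gamma}^j$ with $i\in\{x,y,z\}$, $\gamma\in\{\alpha,-\alpha,\beta,-\beta\}$, $j\in\{1,2,3\}$.
   Context: Let $L$ be an infinite set, $-L=\{-r:r\in L\}$ a disjoint copy of $L$, and $0$ a new element; $L^\dagger=-L\cup\{0\}\cup L$ with $-(-r)=r$, $-0=0$. Adjoin $\pm\infty$ with $-(+\infty)=-\infty$ and set $\bar L^\dagger=L^\dagger\cup\{\pm\infty\}$. Points of $U=(\bar L^\dagger)^3$ have coordinates $x,y,z$. The edgeless cube $Q_L$ is the set of cells: points of $U$ with exactly one coordinate in $\{\pm\infty\}$. For $i\in\{x,y,z\}$, $\alpha\in\bar L^\dagger$, the quarter-turn twist $T_{i,\alpha}$ is the permutation of cells fixing every cell $p$ with $p_i\ne\alpha$ and acting on the others by $T_{x,\alpha}(\alpha,y,z)=(\alpha,-z,y)$, $T_{y,\alpha}(x,\alpha,z)=(z,\alpha,-x)$, $T_{z,\alpha}(x,y,\alpha)=(-y,x,\alpha)$; face twists are the basic twists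 with $\alpha=\pm\infty$. Basic twists are $T,T^2,T^3$ for quarter-turn twists $T$. A basic sequence is a sequence $\langle\sigma_\eta:\eta<\theta\rangle$ of basic twists of ordinal length $\theta$. A configuration is a map $f$ from cells to the six colors red, white, green, orange, yellow, blue together with a special value NaC; it is legal if it never takes value NaC. The solved configuration $f_{\mathrm{solved}}$ colors a cell red, blue, white, orange, green, yellow according as $x=+\infty$, $y=+\infty$, $z=+\infty$, $x=-\infty$, $y=-\infty$, $z=-\infty$. A twist $\sigma$ acts by $(\sigma f)(c)=f(\sigma^{-1}c)$. Applying $\langle\sigma_\eta:\eta<\theta\rangle$ to $f_0$ produces $f_{\eta+1}=\sigma_\eta f_\eta$, and for limit $\lambda\le\theta$, $f_\lambda(c)$ is the eventually constant value of $f_\eta(c)$ ($\eta<\lambda$) if it exists and NaC otherwise; $f_\theta$ is the terminal configuration. $f$ is accessible from $f_0$ if it is the terminal configuration of some basic sequence applied to $f_0$. The cluster of a cell is its orbit under the group generated by all quarter-turn twists; the six center cells (two coordinates equal to $0$) form the center cluster, and the others are non-center. $D=\{(x,y,+\infty):x\in L,\ y\in\{0\}\cup L\}$; every non-center cluster contains exactly one cell of $D$. *)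

theory Defs
  imports Main
begin

text \<open>The extended index set: L is represented as the universe of a type 'a
  (assumed infinite in the theorem). Pos r = r, Neg r = -r, Zero = 0,
  PInf = +infinity, NInf = -infinity.\<close>

datatype 'a coord = Pos 'a | Neg 'a | Zero | PInf | NInf

fun cneg :: "'a coord \<Rightarrow> 'a coord" where
  "cneg (Pos r) = Neg r"
| "cneg (Neg r) = Pos r"
| "cneg Zero = Zero"
| "cneg PInf = NInf"
| "cneg NInf = PInf"

type_synonym 'a point = "'a coord \<times> 'a coord \<times> 'a coord"

definition is_inf :: "'a coord \<Rightarrow> bool" where
  "is_inf a \<longleftrightarrow> a = PInf \<or> a = NInf"

definition is_cell :: "'a point \<Rightarrow> bool" where
  "is_cell p = (case p of (x, y, z) \<Rightarrow>
     (is_inf x \<and> \<not> is_inf y \<and> \<not> is_inf z) \<or>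
     (\<not> is_inf x \<and> is_inf y \<and> \<not> is_inf z) \<or>
     (\<not> is_inf x \<and> \<not> is_inf y \<and> is_inf z))"

datatype axis = AX | AY | AZ

text \<open>Quarter-turn twist T_{i,alpha} (extended to all points of U; it maps cells to cells).\<close>
fun qturn :: "axis \<Rightarrow> 'a coord \<Rightarrow> 'a point \<Rightarrow> 'a point" where
  "qturn AX a (x, y, z) = (if x = a then (x, cneg z, y) else (x, y, z))"
| "qturn AY a (x, y, z) = (if y = a then (z, y, cneg x) else (x, y, z))"
| "qturn AZ a (x, y, z) = (if z = a then (cneg y, x, z) else (x, y, z))"

definition basic_twist_of :: "axis \<Rightarrow> 'a coord \<Rightarrow> nat \<Rightarrow> 'a point \<Rightarrow> 'a point" where
  "basic_twist_of i a j = qturn i a ^^ j"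

definition is_basic_twist :: "('a point \<Rightarrow> 'a point) \<Rightarrow> bool" where
  "is_basic_twist \<sigma> \<longleftrightarrow> (\<exists>i a j. j \<in> {1,2,3} \<and> \<sigma> = basic_twist_of i a j)"

definition is_face_twist :: "('a point \<Rightarrow> 'a point) \<Rightarrow> bool" where
  "is_face_twist \<sigma> \<longleftrightarrow> (\<exists>i a j. a \<in> {PInf, NInf} \<and> j \<in> {1,2,3} \<and> \<sigma> = basic_twist_of i a j)"

datatype color = Red | White | Green | Orange | Yellow | Blue | NaC

type_synonym 'a config = "'a point \<Rightarrow> color"

definition legal :: "'a config \<Rightarrow> bool" where
  "legal f \<longleftrightarrow> (\<forall>c. is_cell c \<longrightarrow> f c \<noteq> NaC)"

text \<open>Solved configuration (non-cells get the dummy value NaC; they are never used).\<close>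
definition f_solved :: "'a config" where
  "f_solved p = (if \<not> is_cell p then NaC else (case p of (x, y, z) \<Rightarrow>
     if x = PInf then Red else if y = PInf then Blue else if z = PInf then White
     else if x = NInf then Orange else if y = NInf then Green else Yellow))"

definition act :: "('a point \<Rightarrow> 'a point) \<Rightarrow> 'a config \<Rightarrow> 'a config" where
  "act \<sigma> f = (\<lambda>c. f (inv \<sigma> c))"

definition apply_seq :: "('a point \<Rightarrow> 'a point) list \<Rightarrow> 'a config \<Rightarrow> 'a config" where
  "apply_seq s f = foldl (\<lambda>g \<sigma>. act \<sigma> g) f s"

text \<open>Transfinite sequences: the sequence has length theta (an element of a
  well-ordered type 'i, positions are the eta < theta); F eta is the
  configuration f_eta for eta \<le> theta.\<close>
definition is_run :: "('i::wellorder \<Rightarrow> ('a point \<Rightarrow> 'a point)) \<Rightarrow> 'i \<Rightarrow> 'a config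
                       \<Rightarrow> ('i \<Rightarrow> 'a config) \<Rightarrow> bool" where
  "is_run \<sigma> \<theta> f0 F \<longleftrightarrow>
     (\<forall>\<eta>\<le>\<theta>.
        ((\<forall>\<xi>. \<not> \<xi> < \<eta>) \<longrightarrow> F \<eta> = f0) \<and>
        (\<forall>\<xi>. \<xi> < \<eta> \<and> \<not> (\<exists>\<zeta>. \<xi> < \<zeta> \<and> \<zeta> < \<eta>) \<longrightarrow> F \<eta> = act (\<sigma> \<xi>) (F \<xi>)) \<and>
        ((\<exists>\<xi>. \<xi> < \<eta>) \<and> (\<forall>\<xi><\<eta>. \<exists>\<zeta>. \<xi> < \<zeta> \<and> \<zeta> < \<eta>) \<longrightarrow>
           (\<forall>c. F \<eta> c =
              (if \<exists>v. \<exists>\<xi><\<eta>. \<forall>\<zeta>. \<xi> \<le> \<zeta> \<and> \<zeta> < \<eta> \<longrightarrow> F \<zeta> c = v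
               then (THE v. \<exists>\<xi><\<eta>. \<forall>\<zeta>. \<xi> \<le> \<zeta> \<and> \<zeta> < \<eta> \<longrightarrow> F \<zeta> c = v)
               else NaC))))"

text \<open>f is accessible from f0 via a basic sequence indexed by an initial segment
  of the well-ordered type 'i (the theorem quantifies over all such types, so
  all ordinal lengths are covered).\<close>
definition accessible :: "'i::wellorder itself \<Rightarrow> 'a config \<Rightarrow> 'a config \<Rightarrow> bool" where
  "accessible _ f0 f \<longleftrightarrow>
     (\<exists>(\<sigma> :: 'i \<Rightarrow> ('a point \<Rightarrow> 'a point)) \<theta> F.
        (\<forall>\<eta><\<theta>. is_basic_twist (\<sigma> \<eta>)) \<and> is_run \<sigma> \<theta> f0 F \<and> F \<theta> = f)"

inductive_set cluster :: "'a point \<Rightarrow> 'a point set" for c where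
  base: "c \<in> cluster c"
| fwd: "d \<in> cluster c \<Longrightarrow> qturn i a d \<in> cluster c"
| bwd: "d \<in> cluster c \<Longrightarrow> inv (qturn i a) d \<in> cluster c"

definition center_cluster :: "'a point set" where
  "center_cluster = {p. is_cell p \<and> (case p of (x, y, z) \<Rightarrow>
      (x = Zero \<and> y = Zero) \<or> (x = Zero \<and> z = Zero) \<or> (y = Zero \<and> z = Zero))}"

end

theory Submission
  imports Defs
begin


lemma cneg_cneg[simp]: "cneg (cneg x) = x"
  by (cases x) auto

lemma cneg_eq_iff[simp]: "(cneg x = y) = (x = cneg y)"
  by (cases x; cases y) auto

lemma is_inf_cneg[simp]: "is_inf (cneg x) = is_inf x"
  by (cases x) (auto simp: is_inf_def)

lemma q4: "qturn i a (qturn i a (qturn i a (qturn i a p))) = p"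
  by (cases i; cases p) auto

lemma cell_qturn[simp]: "is_cell (qturn i a p) = is_cell p"
  by (cases i; cases p) (auto simp: is_cell_def)

type_synonym 'a move = "axis \<times> 'a coord \<times> nat"

definition itw :: "'a move \<Rightarrow> 'a point \<Rightarrow> 'a point" where
  "itw m p = (case m of (i, a, j) \<Rightarrow>
     (if j = 1 then qturn i a (qturn i a (qturn i a p))
      else if j = 2 then qturn i a (qturn i a p)
      else if j = 3 then qturn i a p else p))"

lemma itw_simp[simp]:
  "itw (i, a, 1) p = qturn i a (qturn i a (qturn i a p))"
  "itw (i, a, Suc 0) p = qturn i a (qturn i a (qturn i a p))"
  "itw (i, a, 2) p = qturn i a (qturn i a p)"
  "itw (i, a, 3) p = qturn i a p"
  by (auto simp: itw_def)

primrec iperm :: "'a move list \<Rightarrow> 'a point \<Rightarrow> 'a point" where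
  "iperm [] p = p"
| "iperm (m # ms) p = itw m (iperm ms p)"

lemma iperm_append: "iperm (xs @ ys) p = iperm xs (iperm ys p)"
  by (induction xs) auto

definition jok :: "'a move list \<Rightarrow> bool" where
  "jok ms \<longleftrightarrow> (\<forall>(i, a, j)\<in>set ms. j \<in> {1,2,3})"

lemma cell_itw[simp]: "is_cell (itw m p) = is_cell p"
  by (cases m) (auto simp: itw_def)

lemma cell_iperm[simp]: "is_cell (iperm ms p) = is_cell p"
  by (induction ms) auto

lemma bt_expand:
  "basic_twist_of i a (Suc 0) p = qturn i a p"
  "basic_twist_of i a 2 p = qturn i a (qturn i a p)"
  "basic_twist_of i a 3 p = qturn i a (qturn i a (qturn i a p))"
  by (auto simp: basic_twist_of_def numeral_2_eq_2 numeral_3_eq_3)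

lemma inv_bt:
  assumes "j \<in> {1,2,3}"
  shows "inv (basic_twist_of i a j) = itw (i, a, j)"
proof (rule inv_unique_comp)
  show "basic_twist_of i a j \<circ> itw (i, a, j) = id"
    using assms by (auto simp: fun_eq_iff bt_expand q4)
  show "itw (i, a, j) \<circ> basic_twist_of i a j = id"
    using assms by (auto simp: fun_eq_iff bt_expand q4)
qed

lemma bt_itw[simp]: "j \<in> {1,2,3} \<Longrightarrow> basic_twist_of i a j (itw (i, a, j) p) = p"
  by (auto simp: bt_expand q4)

lemma itw_bt[simp]: "j \<in> {1,2,3} \<Longrightarrow> itw (i, a, j) (basic_twist_of i a j p) = p"
  by (auto simp: bt_expand q4)

definition tw :: "'a move \<Rightarrow> 'a point \<Rightarrow> 'a point" where
  "tw m = (case m of (i, a, j) \<Rightarrow> basic_twist_of i a j)"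

lemma apply_seq_iperm:
  assumes "jok ms"
  shows "apply_seq (map tw ms) f = f \<circ> iperm ms"
  using assms
proof (induction ms arbitrary: f)
  case Nil
  then show ?case by (simp add: apply_seq_def fun_eq_iff)
next
  case (Cons m ms)
  obtain i a j where m: "m = (i, a, j)" by (cases m) auto
  have j: "j \<in> {1,2,3}" using Cons.prems m by (auto simp: jok_def)
  have jms: "jok ms" using Cons.prems by (auto simp: jok_def)
  have "apply_seq (map tw (m # ms)) f = apply_seq (map tw ms) (act (tw m) f)"
    by (simp add: apply_seq_def)
  also have "\<dots> = act (tw m) f \<circ> iperm ms" using Cons.IH jms by (simp add: comp_def)
  also have "\<dots> = f \<circ> iperm (m # ms)"
    using j by (simp add: act_def tw_def m inv_bt fun_eq_iff)
  finally show ?case .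
qed

lemma cluster_trans0: "e \<in> cluster d \<Longrightarrow> d \<in> cluster c \<Longrightarrow> e \<in> cluster c"
  by (induction e rule: cluster.induct) (auto intro: cluster.intros)

lemma cluster_trans: "d \<in> cluster c \<Longrightarrow> e \<in> cluster d \<Longrightarrow> e \<in> cluster c"
  using cluster_trans0 by blast

lemma qturn_inv: "inv (qturn i a) (qturn i a p) = p"
proof -
  have "bij (qturn i a)"
    by (rule o_bij[of "qturn i a \<circ> qturn i a \<circ> qturn i a"]) (auto simp: fun_eq_iff q4)
  then show ?thesis by (simp add: bij_is_inj)
qed

lemma qturn_inv2: "qturn i a (inv (qturn i a) p) = p"
proof -
  have "bij (qturn i a)"
    by (rule o_bij[of "qturn i a \<circ> qturn i a \<circ> qturn i a"]) (auto simp: fun_eq_iff q4)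
  then show ?thesis by (simp add: bij_is_surj surj_f_inv_f)
qed

lemma cluster_sym: "d \<in> cluster c \<Longrightarrow> c \<in> cluster d"
proof (induction d rule: cluster.induct)
  case base
  then show ?case by (rule cluster.base)
next
  case (fwd d i a)
  have "d \<in> cluster (qturn i a d)"
    using cluster.bwd[OF cluster.base, of i a "qturn i a d"] by (simp add: qturn_inv)
  then show ?case using fwd.IH cluster_trans by blast
next
  case (bwd d i a)
  have "d \<in> cluster (inv (qturn i a) d)"
    using cluster.fwd[OF cluster.base, of i a "inv (qturn i a) d"] by (simp add: qturn_inv2)
  then show ?case using bwd.IH cluster_trans by blast
qed

lemma cluster_itw: "d \<in> cluster c \<Longrightarrow> itw m d \<in> cluster c"
  by (cases m) (auto simp: itw_def intro!: cluster.fwd)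

lemma cluster_iperm: "d \<in> cluster c \<Longrightarrow> iperm ms d \<in> cluster c"
  by (induction ms) (auto intro: cluster_itw)


definition cyc3 :: "'b \<Rightarrow> 'b \<Rightarrow> 'b \<Rightarrow> 'b \<Rightarrow> 'b" where
  "cyc3 a b c p = (if p = a then b else if p = b then c else if p = c then a else p)"

definition allowed :: "'a coord \<Rightarrow> 'a coord \<Rightarrow> 'a move list \<Rightarrow> bool" where
  "allowed \<alpha> \<beta> ms \<longleftrightarrow> (\<forall>(i, a, j)\<in>set ms. j \<in> {1,2,3} \<and> a \<in> {PInf, NInf, \<alpha>, cneg \<alpha>, \<beta>, cneg \<beta>})"

definition Rc :: "'a coord \<Rightarrow> 'a coord \<Rightarrow> ('a point \<Rightarrow> 'a point) \<Rightarrow> bool" where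
  "Rc \<alpha> \<beta> V \<longleftrightarrow> (\<exists>ms. allowed \<alpha> \<beta> ms \<and> (\<forall>p. is_cell p \<longrightarrow> iperm ms p = V p))"

lemma allowed_append[simp]: "allowed \<alpha> \<beta> (xs @ ys) = (allowed \<alpha> \<beta> xs \<and> allowed \<alpha> \<beta> ys)"
  unfolding allowed_def set_append ball_Un by blast

lemma allowed_jok: "allowed \<alpha> \<beta> ms \<Longrightarrow> jok ms"
  by (auto simp: allowed_def jok_def)

lemma Rc_id: "Rc \<alpha> \<beta> id"
  by (auto simp: Rc_def intro: exI[of _ "[]"] simp: allowed_def)

lemma Rc_comp: "Rc \<alpha> \<beta> V \<Longrightarrow> Rc \<alpha> \<beta> W \<Longrightarrow> Rc \<alpha> \<beta> (V \<circ> W)"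
proof -
  assume "Rc \<alpha> \<beta> V" "Rc \<alpha> \<beta> W"
  then obtain ms1 ms2 where m1: "allowed \<alpha> \<beta> ms1" "\<forall>p. is_cell p \<longrightarrow> iperm ms1 p = V p"
    and m2: "allowed \<alpha> \<beta> ms2" "\<forall>p. is_cell p \<longrightarrow> iperm ms2 p = W p"
    unfolding Rc_def by blast
  have "\<forall>p. is_cell p \<longrightarrow> iperm (ms1 @ ms2) p = (V \<circ> W) p"
  proof (intro allI impI)
    fix p :: "'a point" assume c: "is_cell p"
    then have "is_cell (iperm ms2 p)" by simp
    have e2: "iperm ms2 p = W p" using m2 c by blast
    have "is_cell (W p)" using c e2[symmetric] by simp
    then have "iperm ms1 (W p) = V (W p)" using m1 by blast
    then show "iperm (ms1 @ ms2) p = (V \<circ> W) p" using e2 by (simp add: iperm_append)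
  qed
  then show ?thesis using m1 m2 unfolding Rc_def by (intro exI[of _ "ms1 @ ms2"]) simp
qed

definition flipm :: "'a move \<Rightarrow> 'a move" where
  "flipm m = (case m of (i, a, j) \<Rightarrow> (i, a, 4 - j))"

definition winv :: "'a move list \<Rightarrow> 'a move list" where
  "winv ms = rev (map flipm ms)"

lemma itw_flip1: "j \<in> {1,2,3} \<Longrightarrow> itw (i, a, j) (itw (flipm (i, a, j)) p) = p"
  by (auto simp: flipm_def q4)

lemma itw_flip2: "j \<in> {1,2,3} \<Longrightarrow> itw (flipm (i, a, j)) (itw (i, a, j) p) = p"
  by (auto simp: flipm_def q4)

lemma iperm_winv1: "jok ms \<Longrightarrow> iperm ms (iperm (winv ms) p) = p"
proof (induction ms arbitrary: p)
  case Nil then show ?case by (simp add: winv_def)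
next
  case (Cons m ms)
  obtain i a j where m: "m = (i, a, j)" by (cases m) auto
  have j: "j \<in> {1,2,3}" and jms: "jok ms" using Cons.prems m by (auto simp: jok_def)
  have "iperm (m # ms) (iperm (winv (m # ms)) p) = itw m (iperm ms (iperm (winv ms) (itw (flipm m) p)))"
    by (simp add: winv_def iperm_append)
  also have "\<dots> = p"
  proof -
    have "iperm ms (iperm (winv ms) (itw (flipm m) p)) = itw (flipm m) p" using Cons.IH[OF jms] by simp
    then show ?thesis using itw_flip1[OF j] m by simp
  qed
  finally show ?case .
qed

lemma iperm_winv2: "jok ms \<Longrightarrow> iperm (winv ms) (iperm ms p) = p"
proof (induction ms arbitrary: p)
  case Nil then show ?case by (simp add: winv_def)
next
  case (Cons m ms)
  obtain i a j where m: "m = (i, a, j)" by (cases m) auto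
  have j: "j \<in> {1,2,3}" and jms: "jok ms" using Cons.prems m by (auto simp: jok_def)
  have "iperm (winv (m # ms)) (iperm (m # ms) p) = iperm (winv ms) (itw (flipm m) (itw m (iperm ms p)))"
    by (simp add: winv_def iperm_append)
  also have "\<dots> = p"
  proof -
    have "itw (flipm m) (itw m (iperm ms p)) = iperm ms p" using itw_flip2[OF j] m by simp
    then show ?thesis using Cons.IH[OF jms] by simp
  qed
  finally show ?case .
qed

lemma allowed_winv: "allowed \<alpha> \<beta> ms \<Longrightarrow> allowed \<alpha> \<beta> (winv ms)"
  by (auto simp: allowed_def winv_def flipm_def)

lemma Rc_conj:
  assumes aB: "allowed \<alpha> \<beta> B" and B: "\<And>p. is_cell p \<Longrightarrow> iperm B p = cyc3 p0 q0 r0 p"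
    and ac: "allowed \<alpha> \<beta> c"
  shows "Rc \<alpha> \<beta> (cyc3 (iperm c p0) (iperm c q0) (iperm c r0))"
proof -
  have jc: "jok c" using ac by (rule allowed_jok)
  have "\<forall>p. is_cell p \<longrightarrow> iperm (c @ B @ winv c) p = cyc3 (iperm c p0) (iperm c q0) (iperm c r0) p"
  proof (intro allI impI)
    fix p :: "'a point" assume cp: "is_cell p"
    let ?q = "iperm (winv c) p"
    have cq: "is_cell ?q" using cp by simp
    have pq: "p = iperm c ?q" using iperm_winv1[OF jc] by simp
    have inj: "\<And>u v. (iperm c u = iperm c v) = (u = v)"
      by (metis iperm_winv2[OF jc])
    have "iperm (c @ B @ winv c) p = iperm c (cyc3 p0 q0 r0 ?q)"
      using B[OF cq] by (simp add: iperm_append)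
    also have "\<dots> = cyc3 (iperm c p0) (iperm c q0) (iperm c r0) p"
      apply (subst (2) pq)
      unfolding cyc3_def inj by simp
    finally show "iperm (c @ B @ winv c) p = cyc3 (iperm c p0) (iperm c q0) (iperm c r0) p" .
  qed
  moreover have "allowed \<alpha> \<beta> (c @ B @ winv c)" using aB ac allowed_winv by simp
  ultimately show ?thesis unfolding Rc_def by blast
qed

lemma cyc3_rot: "a \<noteq> b \<Longrightarrow> b \<noteq> c \<Longrightarrow> a \<noteq> c \<Longrightarrow> cyc3 a b c = cyc3 b c a"
  by (auto simp: cyc3_def fun_eq_iff)

lemma all3:
  assumes comp: "\<And>V W. V \<in> R \<Longrightarrow> W \<in> R \<Longrightarrow> V \<circ> W \<in> R"
    and ab: "a \<in> C" "b \<in> C" "a \<noteq> b"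
    and base: "\<And>x. x \<in> C \<Longrightarrow> x \<noteq> a \<Longrightarrow> x \<noteq> b \<Longrightarrow> cyc3 a b x \<in> R"
    and five: "\<And>y z. \<exists>w\<in>C. w \<notin> {a, b, y, z}"
    and xyz: "x \<in> C" "y \<in> C" "z \<in> C" "x \<noteq> y" "y \<noteq> z" "x \<noteq> z"
  shows "cyc3 x y z \<in> R"
proof -
  have I1: "cyc3 a x b \<in> R" if "x \<in> C" "x \<noteq> a" "x \<noteq> b" for x
  proof -
    have "cyc3 a x b = cyc3 a b x \<circ> cyc3 a b x" using that ab by (auto simp: cyc3_def fun_eq_iff)
    then show ?thesis using comp base that by metis
  qed
  have I2: "cyc3 a x y \<in> R" if "x \<in> C" "y \<in> C" "x \<noteq> a" "x \<noteq> b" "y \<noteq> a" "y \<noteq> b" "x \<noteq> y" for x y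
  proof -
    have "cyc3 a x y = cyc3 a y b \<circ> cyc3 a b x \<circ> cyc3 a b y" using that ab by (auto simp: cyc3_def fun_eq_iff)
    then show ?thesis using comp base I1 that by metis
  qed
  have Ia: "cyc3 a y z \<in> R" if "y \<in> C" "z \<in> C" "y \<noteq> a" "z \<noteq> a" "y \<noteq> z" for y z
  proof (cases "y = b")
    case True then show ?thesis using base that by simp
  next
    case False
    show ?thesis
    proof (cases "z = b")
      case True then show ?thesis using I1 that False by simp
    next
      case False2: False
      then show ?thesis using I2 that False by simp
    qed
  qed
  have Ib: "cyc3 b y z \<in> R" if "y \<in> C" "z \<in> C" "y \<noteq> a" "z \<noteq> a" "y \<noteq> b" "z \<noteq> b" "y \<noteq> z" for y z
  proof -
    obtain w where w: "w \<in> C" "w \<notin> {a, b, y, z}" using five by blast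
    have "cyc3 b y z = cyc3 a b w \<circ> cyc3 a y z \<circ> cyc3 a w b" using that ab w by (auto simp: cyc3_def fun_eq_iff)
    moreover have "cyc3 a b w \<in> R" using base w ab by auto
    moreover have "cyc3 a y z \<in> R" using I2 that by auto
    moreover have "cyc3 a w b \<in> R" using I1 w ab by auto
    ultimately show ?thesis using comp by metis
  qed
  have Ic: "cyc3 x y z \<in> R" if "x \<in> C" "y \<in> C" "z \<in> C" "x \<notin> {a,b}" "y \<notin> {a,b}" "z \<notin> {a,b}"
     "x \<noteq> y" "y \<noteq> z" "x \<noteq> z" for x y z
  proof -
    have "cyc3 x y z = cyc3 a x b \<circ> cyc3 a y z \<circ> cyc3 a b x" using that ab by (auto simp: cyc3_def fun_eq_iff)
    moreover have "cyc3 a x b \<in> R" using I1 that by auto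
    moreover have "cyc3 a y z \<in> R" using I2 that by auto
    moreover have "cyc3 a b x \<in> R" using base that by auto
    ultimately show ?thesis using comp by metis
  qed
  have r1: "cyc3 x y z = cyc3 y z x" and r2: "cyc3 x y z = cyc3 z x y"
    using xyz by (auto simp: cyc3_def fun_eq_iff)
  consider "a = x" | "a = y" | "a = z" | "b = x" "a \<notin> {x,y,z}" | "b = y" "a \<notin> {x,y,z}"
    | "b = z" "a \<notin> {x,y,z}" | "a \<notin> {x,y,z}" "b \<notin> {x,y,z}" by blast
  then show ?thesis
  proof cases
    case 1 then show ?thesis using Ia[of y z] xyz by simp
  next
    case 2 then show ?thesis using Ia[of z x] xyz r1 by auto
  next
    case 3 then show ?thesis using Ia[of x y] xyz r2 by auto
  next
    case 4 then show ?thesis using Ib[of y z] xyz by auto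
  next
    case 5 then show ?thesis using Ib[of z x] xyz r1 by auto
  next
    case 6 then show ?thesis using Ib[of x y] xyz r2 by auto
  next
    case 7 then show ?thesis using Ic[of x y z] xyz by auto
  qed
qed


lemma cyc3_inv: "a \<noteq> b \<Longrightarrow> b \<noteq> c \<Longrightarrow> a \<noteq> c \<Longrightarrow> cyc3 a c b (cyc3 a b c p) = p"
  by (auto simp: cyc3_def)

lemma count_perm:
  assumes fin: "finite C" and s: "\<And>p. p \<in> C \<Longrightarrow> \<sigma> p \<in> C" and s': "\<And>p. p \<in> C \<Longrightarrow> \<sigma>' p \<in> C"
    and inv1: "\<And>p. \<sigma>' (\<sigma> p) = p" and inv2: "\<And>p. \<sigma> (\<sigma>' p) = p"
  shows "card {p\<in>C. h (\<sigma> p) = k} = card {p\<in>C. h p = k}"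
proof (rule bij_betw_same_card[of \<sigma>])
  show "bij_betw \<sigma> {p \<in> C. h (\<sigma> p) = k} {p \<in> C. h p = k}"
    unfolding bij_betw_def
  proof
    show "inj_on \<sigma> {p \<in> C. h (\<sigma> p) = k}" by (metis inj_onI inv1)
    show "\<sigma> ` {p \<in> C. h (\<sigma> p) = k} = {p \<in> C. h p = k}"
    proof
      show "\<sigma> ` {p \<in> C. h (\<sigma> p) = k} \<subseteq> {p \<in> C. h p = k}" using s by auto
      show "{p \<in> C. h p = k} \<subseteq> \<sigma> ` {p \<in> C. h (\<sigma> p) = k}"
      proof
        fix q assume q: "q \<in> {p \<in> C. h p = k}"
        then have "\<sigma>' q \<in> {p \<in> C. h (\<sigma> p) = k}" using s' inv2 by auto
        then show "q \<in> \<sigma> ` {p \<in> C. h (\<sigma> p) = k}" using inv2[of q] by (metis image_eqI)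
      qed
    qed
  qed
qed

lemma sort_lemma:
  fixes C :: "'b set" and R :: "('b \<Rightarrow> 'b) set" and col :: "'b \<Rightarrow> 'c"
  assumes fin: "finite C"
    and comp: "\<And>V W. V \<in> R \<Longrightarrow> W \<in> R \<Longrightarrow> V \<circ> W \<in> R"
    and idR: "id \<in> R"
    and cyc: "\<And>x y z. x \<in> C \<Longrightarrow> y \<in> C \<Longrightarrow> z \<in> C \<Longrightarrow> x \<noteq> y \<Longrightarrow> y \<noteq> z \<Longrightarrow> x \<noteq> z \<Longrightarrow> cyc3 x y z \<in> R"
    and partner: "\<And>d. d \<in> C \<Longrightarrow> \<exists>d'\<in>C. d' \<noteq> d \<and> col d' = col d"
  shows "(\<forall>k. card {p\<in>C. h p = k} = card {p\<in>C. col p = k}) \<Longrightarrow>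
    \<exists>V\<in>R. (\<forall>p. p \<notin> C \<longrightarrow> V p = p) \<and> (\<forall>d\<in>C. V d \<in> C \<and> h (V d) = col d)"
proof (induction "card {p\<in>C. h p \<noteq> col p}" arbitrary: h rule: less_induct)
  case less
  note cnt = less.prems
  show ?case
  proof (cases "\<forall>d\<in>C. h d = col d")
    case True
    then show ?thesis using idR by (intro bexI[of _ id]) auto
  next
    case False
    then obtain d where d: "d \<in> C" "h d \<noteq> col d" by blast
    define k where "k = col d"
    obtain e where e: "e \<in> C" "h e = k" "col e \<noteq> k"
    proof (rule ccontr)
      assume "\<not> thesis"
      with that have H: "\<forall>e\<in>C. h e = k \<longrightarrow> col e = k" by blast
      have sub: "{p\<in>C. h p = k} \<subseteq> {p\<in>C. col p = k} - {d}" using H d k_def by auto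
      have "card {p\<in>C. h p = k} \<le> card ({p\<in>C. col p = k} - {d})"
        using card_mono[OF _ sub] fin by auto
      also have "\<dots> < card {p\<in>C. col p = k}"
        using fin d k_def by (intro card_Diff1_less) auto
      finally show False using cnt by simp
    qed
    have "card {p\<in>C. col p = h d} = card {p\<in>C. h p = h d}" using cnt by simp
    moreover have "card {p\<in>C. h p = h d} > 0" using fin d by (auto simp: card_gt_0_iff)
    ultimately have "card {p\<in>C. col p = h d} \<noteq> 0" by linarith
    then have "{p\<in>C. col p = h d} \<noteq> {}" by (metis card.empty)
    then obtain y where y: "y \<in> C" "col y = h d" by auto
    obtain y' where y': "y' \<in> C" "y' \<noteq> y" "col y' = col y" using partner[OF y(1)] by auto
    obtain x where x: "x \<in> C" "col x = h d" "x \<noteq> e"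
      using y y' by (cases "y = e") auto
    have de: "d \<noteq> e" using d e k_def by auto
    have dx: "d \<noteq> x" using x d by auto
    have ex: "e \<noteq> x" using x by auto
    define \<sigma> where "\<sigma> = cyc3 d e x"
    define \<sigma>' where "\<sigma>' = cyc3 d x e"
    have sC: "\<And>p. p \<in> C \<Longrightarrow> \<sigma> p \<in> C" using d e x by (auto simp: \<sigma>_def cyc3_def)
    have sC': "\<And>p. p \<in> C \<Longrightarrow> \<sigma>' p \<in> C" using d e x by (auto simp: \<sigma>'_def cyc3_def)
    have i1: "\<And>p. \<sigma>' (\<sigma> p) = p" using de dx ex by (auto simp: \<sigma>_def \<sigma>'_def cyc3_def)
    have i2: "\<And>p. \<sigma> (\<sigma>' p) = p" using de dx ex by (auto simp: \<sigma>_def \<sigma>'_def cyc3_def)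
    let ?h = "\<lambda>p. h (\<sigma> p)"
    have cnt': "\<forall>k. card {p\<in>C. ?h p = k} = card {p\<in>C. col p = k}"
      using count_perm[OF fin sC sC' i1 i2, of h] cnt by simp
    have sub: "{p\<in>C. ?h p \<noteq> col p} \<subseteq> {p\<in>C. h p \<noteq> col p} - {d}"
    proof
      fix p assume p: "p \<in> {p\<in>C. ?h p \<noteq> col p}"
      show "p \<in> {p\<in>C. h p \<noteq> col p} - {d}"
      proof (cases "p = d \<or> p = e \<or> p = x")
        case True
        then show ?thesis using p d e x de dx ex k_def by (auto simp: \<sigma>_def cyc3_def)
      next
        case False
        then have "\<sigma> p = p" by (auto simp: \<sigma>_def cyc3_def)
        then show ?thesis using p False by auto
      qed
    qed
    have lt: "card {p\<in>C. ?h p \<noteq> col p} < card {p\<in>C. h p \<noteq> col p}"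
    proof -
      have "card {p\<in>C. ?h p \<noteq> col p} \<le> card ({p\<in>C. h p \<noteq> col p} - {d})"
        using card_mono[OF _ sub] fin by auto
      also have "\<dots> < card {p\<in>C. h p \<noteq> col p}"
        using fin d by (intro card_Diff1_less) auto
      finally show ?thesis .
    qed
    obtain V' where V': "V' \<in> R" "\<forall>p. p \<notin> C \<longrightarrow> V' p = p" "\<forall>d\<in>C. V' d \<in> C \<and> ?h (V' d) = col d"
      using less.hyps[OF lt cnt'] by blast
    have sR: "\<sigma> \<in> R" unfolding \<sigma>_def using cyc d e x de dx ex by auto
    show ?thesis
    proof (intro bexI[of _ "\<sigma> \<circ> V'"] conjI)
      show "\<sigma> \<circ> V' \<in> R" using comp sR V' by blast
      show "\<forall>p. p \<notin> C \<longrightarrow> (\<sigma> \<circ> V') p = p"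
        using V'(2) d e x by (auto simp: \<sigma>_def cyc3_def)
      show "\<forall>d\<in>C. (\<sigma> \<circ> V') d \<in> C \<and> h ((\<sigma> \<circ> V') d) = col d"
        using V'(3) sC by auto
    qed
  qed
qed


lemma common_bound:
  fixes F :: "'i::wellorder \<Rightarrow> 'p \<Rightarrow> 'v" and \<eta> :: 'i
  assumes "finite A" and ex: "\<exists>\<xi>. \<xi> < \<eta>"
  shows "(\<forall>d\<in>A. \<exists>\<xi><\<eta>. \<forall>\<zeta>. \<xi> \<le> \<zeta> \<and> \<zeta> < \<eta> \<longrightarrow> F \<zeta> d = F \<xi> d) \<Longrightarrow>
    \<exists>\<xi>0<\<eta>. \<forall>d\<in>A. \<forall>\<zeta>. \<xi>0 \<le> \<zeta> \<and> \<zeta> < \<eta> \<longrightarrow> F \<zeta> d = F \<xi>0 d"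
  using assms(1)
proof (induction A rule: finite_induct)
  case empty
  then show ?case using ex by auto
next
  case (insert d A)
  then obtain \<xi>A where A: "\<xi>A < \<eta>" "\<forall>d\<in>A. \<forall>\<zeta>. \<xi>A \<le> \<zeta> \<and> \<zeta> < \<eta> \<longrightarrow> F \<zeta> d = F \<xi>A d" by auto
  obtain \<xi>d where D: "\<xi>d < \<eta>" "\<forall>\<zeta>. \<xi>d \<le> \<zeta> \<and> \<zeta> < \<eta> \<longrightarrow> F \<zeta> d = F \<xi>d d" using insert.prems by auto
  let ?m = "max \<xi>A \<xi>d"
  have m: "?m < \<eta>" using A D by simp
  have "\<forall>e\<in>insert d A. \<forall>\<zeta>. ?m \<le> \<zeta> \<and> \<zeta> < \<eta> \<longrightarrow> F \<zeta> e = F ?m e"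
  proof (intro ballI allI impI)
    fix e \<zeta> assume e: "e \<in> insert d A" and z: "?m \<le> \<zeta> \<and> \<zeta> < \<eta>"
    show "F \<zeta> e = F ?m e"
    proof (cases "e = d")
      case True
      then show ?thesis using D z m by (metis max.cobounded2 order_refl order.trans)
    next
      case False
      then have "e \<in> A" using e by auto
      then show ?thesis using A z m by (metis max.cobounded1 order_refl order.trans)
    qed
  qed
  then show ?case using m by blast
qed

lemma clos_itw: "(\<And>d i a. d \<in> C \<Longrightarrow> qturn i a d \<in> C) \<Longrightarrow> d \<in> C \<Longrightarrow> itw m d \<in> C"
  by (cases m) (auto simp: itw_def)

lemma clos_bt:
  assumes cl: "\<And>d i a. d \<in> C \<Longrightarrow> qturn i a d \<in> C" and d: "d \<in> C" and j: "j \<in> {1,2,3}"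
  shows "basic_twist_of i a j d \<in> C"
proof -
  consider "j = 1" | "j = 2" | "j = 3" using j by blast
  then show ?thesis by cases (simp_all add: bt_expand cl d)
qed

lemma run_inv:
  fixes \<sigma> :: "'i::wellorder \<Rightarrow> 'a point \<Rightarrow> 'a point"
  assumes fin: "finite C"
    and clos: "\<And>d i a. d \<in> C \<Longrightarrow> qturn i a d \<in> C"
    and run: "is_run \<sigma> \<theta> f_solved F"
    and bas: "\<forall>\<eta><\<theta>. is_basic_twist (\<sigma> \<eta>)"
  shows "\<eta> \<le> \<theta> \<Longrightarrow> (\<exists>ms. jok ms \<and> (\<forall>d\<in>C. F \<eta> d = f_solved (iperm ms d))) \<or> (\<exists>d\<in>C. F \<eta> d = NaC)"
proof (induction \<eta> rule: less_induct)
  case (less \<eta>)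
  note R = run[unfolded is_run_def, rule_format, OF less.prems]
  note R1 = R[THEN conjunct1] and R2 = R[THEN conjunct2, THEN conjunct1]
    and R3 = R[THEN conjunct2, THEN conjunct2]
  consider (bot) "\<forall>\<xi>. \<not> \<xi> < \<eta>" | (succ) \<xi> where "\<xi> < \<eta>" "\<not> (\<exists>\<zeta>. \<xi> < \<zeta> \<and> \<zeta> < \<eta>)"
    | (lim) "\<exists>\<xi>. \<xi> < \<eta>" "\<forall>\<xi><\<eta>. \<exists>\<zeta>. \<xi> < \<zeta> \<and> \<zeta> < \<eta>"
  proof -
    assume a1: "\<forall>\<xi>. \<not> \<xi> < \<eta> \<Longrightarrow> thesis"
      and a2: "\<And>\<xi>. \<xi> < \<eta> \<Longrightarrow> \<not> (\<exists>\<zeta>. \<xi> < \<zeta> \<and> \<zeta> < \<eta>) \<Longrightarrow> thesis"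
      and a3: "\<exists>\<xi>. \<xi> < \<eta> \<Longrightarrow> \<forall>\<xi><\<eta>. \<exists>\<zeta>. \<xi> < \<zeta> \<and> \<zeta> < \<eta> \<Longrightarrow> thesis"
    show thesis
    proof (cases "\<exists>\<xi>. \<xi> < \<eta>")
      case False then show thesis using a1 by simp
    next
      case True
      show thesis
      proof (cases "\<forall>\<xi><\<eta>. \<exists>\<zeta>. \<xi> < \<zeta> \<and> \<zeta> < \<eta>")
        case True2: True
        show thesis by (rule a3[OF True True2])
      next
        case False
        then obtain \<xi> where "\<xi> < \<eta>" "\<not> (\<exists>\<zeta>. \<xi> < \<zeta> \<and> \<zeta> < \<eta>)" by auto
        then show thesis by (rule a2)
      qed
    qed
  qed
  then show ?case
  proof cases
    case bot
    then have "F \<eta> = f_solved" using R1 by simp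
    then show ?thesis by (intro disjI1 exI[of _ "[]"]) (auto simp: jok_def)
  next
    case succ
    then have Fe: "F \<eta> = act (\<sigma> \<xi>) (F \<xi>)" using R2 by simp
    have xt: "\<xi> < \<theta>" using succ less.prems by auto
    then obtain i a j where j: "j \<in> {1,2,3}" and sg: "\<sigma> \<xi> = basic_twist_of i a j"
      using bas unfolding is_basic_twist_def by blast
    have Fe2: "\<And>d. F \<eta> d = F \<xi> (itw (i, a, j) d)"
      using Fe sg j by (simp add: act_def inv_bt)
    have IH: "(\<exists>ms. jok ms \<and> (\<forall>d\<in>C. F \<xi> d = f_solved (iperm ms d))) \<or> (\<exists>d\<in>C. F \<xi> d = NaC)"
      using less.IH[OF succ(1)] xt by simp
    then show ?thesis
    proof
      assume "\<exists>ms. jok ms \<and> (\<forall>d\<in>C. F \<xi> d = f_solved (iperm ms d))"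
      then obtain ms where ms: "jok ms" "\<forall>d\<in>C. F \<xi> d = f_solved (iperm ms d)" by blast
      have "\<forall>d\<in>C. F \<eta> d = f_solved (iperm (ms @ [(i, a, j)]) d)"
        using ms(2) Fe2 clos_itw[OF clos] by (simp add: iperm_append)
      moreover have "jok (ms @ [(i, a, j)])" using ms(1) j by (auto simp: jok_def)
      ultimately show ?thesis by blast
    next
      assume "\<exists>d\<in>C. F \<xi> d = NaC"
      then obtain d where d: "d \<in> C" "F \<xi> d = NaC" by blast
      have "F \<eta> (basic_twist_of i a j d) = NaC" using Fe2 d j by simp
      moreover have "basic_twist_of i a j d \<in> C" using clos_bt[OF clos d(1) j] .
      ultimately show ?thesis by blast
    qed
  next
    case lim
    note Fl = mp[OF R3 conjI[OF lim(1) lim(2)], rule_format]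
    show ?thesis
    proof (cases "\<forall>d\<in>C. \<exists>v. \<exists>\<xi><\<eta>. \<forall>\<zeta>. \<xi> \<le> \<zeta> \<and> \<zeta> < \<eta> \<longrightarrow> F \<zeta> d = v")
      case True
      have "\<forall>d\<in>C. \<exists>\<xi><\<eta>. \<forall>\<zeta>. \<xi> \<le> \<zeta> \<and> \<zeta> < \<eta> \<longrightarrow> F \<zeta> d = F \<xi> d"
      proof
        fix d assume "d \<in> C"
        then obtain v \<xi> where "\<xi> < \<eta>" "\<forall>\<zeta>. \<xi> \<le> \<zeta> \<and> \<zeta> < \<eta> \<longrightarrow> F \<zeta> d = v" using True by blast
        then show "\<exists>\<xi><\<eta>. \<forall>\<zeta>. \<xi> \<le> \<zeta> \<and> \<zeta> < \<eta> \<longrightarrow> F \<zeta> d = F \<xi> d" by auto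
      qed
      then obtain \<xi>0 where x0: "\<xi>0 < \<eta>" "\<forall>d\<in>C. \<forall>\<zeta>. \<xi>0 \<le> \<zeta> \<and> \<zeta> < \<eta> \<longrightarrow> F \<zeta> d = F \<xi>0 d"
        using common_bound[OF fin lim(1), of F] by blast
      have eq: "\<forall>d\<in>C. F \<eta> d = F \<xi>0 d"
      proof
        fix d assume d: "d \<in> C"
        have ex: "\<exists>v. \<exists>\<xi><\<eta>. \<forall>\<zeta>. \<xi> \<le> \<zeta> \<and> \<zeta> < \<eta> \<longrightarrow> F \<zeta> d = v" using x0 d by blast
        have "(THE v. \<exists>\<xi><\<eta>. \<forall>\<zeta>. \<xi> \<le> \<zeta> \<and> \<zeta> < \<eta> \<longrightarrow> F \<zeta> d = v) = F \<xi>0 d"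
        proof (rule the_equality)
          show "\<exists>\<xi><\<eta>. \<forall>\<zeta>. \<xi> \<le> \<zeta> \<and> \<zeta> < \<eta> \<longrightarrow> F \<zeta> d = F \<xi>0 d" using x0 d by blast
        next
          fix v assume "\<exists>\<xi><\<eta>. \<forall>\<zeta>. \<xi> \<le> \<zeta> \<and> \<zeta> < \<eta> \<longrightarrow> F \<zeta> d = v"
          then obtain \<xi>1 where x1: "\<xi>1 < \<eta>" "\<forall>\<zeta>. \<xi>1 \<le> \<zeta> \<and> \<zeta> < \<eta> \<longrightarrow> F \<zeta> d = v" by blast
          let ?m = "max \<xi>1 \<xi>0"
          have mlt: "?m < \<eta>" using x1(1) x0(1) by simp
          have "F ?m d = v" using x1(2)[rule_format, of ?m] mlt by simp
          moreover have "F ?m d = F \<xi>0 d" using x0(2)[rule_format, OF d, of ?m] mlt by simp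
          ultimately show "v = F \<xi>0 d" by simp
        qed
        then show "F \<eta> d = F \<xi>0 d" using Fl[of d] ex by simp
      qed
      have "(\<exists>ms. jok ms \<and> (\<forall>d\<in>C. F \<xi>0 d = f_solved (iperm ms d))) \<or> (\<exists>d\<in>C. F \<xi>0 d = NaC)"
      proof -
        have "\<xi>0 \<le> \<theta>" using x0(1) less.prems by simp
        then show ?thesis using less.IH[OF x0(1)] by simp
      qed
      then show ?thesis
      proof
        assume "\<exists>ms. jok ms \<and> (\<forall>d\<in>C. F \<xi>0 d = f_solved (iperm ms d))"
        then obtain ms where "jok ms" "\<forall>d\<in>C. F \<xi>0 d = f_solved (iperm ms d)" by blast
        then have "jok ms \<and> (\<forall>d\<in>C. F \<eta> d = f_solved (iperm ms d))" using eq by simp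
        then show ?thesis by blast
      next
        assume "\<exists>d\<in>C. F \<xi>0 d = NaC"
        then obtain d where "d \<in> C" "F \<xi>0 d = NaC" by blast
        then have "d \<in> C \<and> F \<eta> d = NaC" using eq by simp
        then show ?thesis by blast
      qed
    next
      case False
      then obtain d where d: "d \<in> C" "\<not> (\<exists>v. \<exists>\<xi><\<eta>. \<forall>\<zeta>. \<xi> \<le> \<zeta> \<and> \<zeta> < \<eta> \<longrightarrow> F \<zeta> d = v)" by blast
      have "F \<eta> d = NaC" by (simp only: Fl[of d] if_not_P[OF d(2)])
      then show ?thesis using d by blast
    qed
  qed
qed


definition good :: "'a coord \<Rightarrow> 'a coord \<Rightarrow> 'a point set \<Rightarrow> bool" where
  "good \<alpha> \<beta> C \<longleftrightarrow> finite C \<and> (\<forall>d\<in>C. is_cell d) \<and> (\<forall>d\<in>C. \<forall>i a. qturn i a d \<in> C) \<and>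
     (\<forall>d\<in>C. \<exists>d'\<in>C. d' \<noteq> d \<and> f_solved d' = f_solved d) \<and>
     (\<forall>x\<in>C. \<forall>y\<in>C. \<forall>z\<in>C. x \<noteq> y \<longrightarrow> y \<noteq> z \<longrightarrow> x \<noteq> z \<longrightarrow> Rc \<alpha> \<beta> (cyc3 x y z))"

lemma clos_iperm: "(\<And>d i a. d \<in> C \<Longrightarrow> qturn i a d \<in> C) \<Longrightarrow> d \<in> C \<Longrightarrow> iperm ms d \<in> C"
  by (induction ms) (auto intro: clos_itw)

lemma main_generic:
  assumes g: "good \<alpha> \<beta> C" and lg: "legal f" and acc: "accessible TYPE('i::wellorder) f_solved f"
  shows "\<exists>s. (\<forall>\<sigma>\<in>set s. is_face_twist \<sigma> \<or>
               (\<exists>i \<gamma> j. \<gamma> \<in> {\<alpha>, cneg \<alpha>, \<beta>, cneg \<beta>} \<and> j \<in> {1,2,3} \<and>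
                        \<sigma> = basic_twist_of i \<gamma> j)) \<and>
             (\<forall>d\<in>C. apply_seq s f d = f_solved d) \<and>
             (\<forall>d. is_cell d \<and> d \<notin> C \<longrightarrow> apply_seq s f d = f d)"
proof -
  have fin: "finite C" and cells: "\<And>d. d \<in> C \<Longrightarrow> is_cell d"
    and clos: "\<And>d i a. d \<in> C \<Longrightarrow> qturn i a d \<in> C"
    and partner: "\<And>d. d \<in> C \<Longrightarrow> \<exists>d'\<in>C. d' \<noteq> d \<and> f_solved d' = f_solved d"
    and cyc: "\<And>x y z. x \<in> C \<Longrightarrow> y \<in> C \<Longrightarrow> z \<in> C \<Longrightarrow> x \<noteq> y \<Longrightarrow> y \<noteq> z \<Longrightarrow> x \<noteq> z \<Longrightarrow> Rc \<alpha> \<beta> (cyc3 x y z)"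
    using g unfolding good_def by blast+
  obtain \<sigma> :: "'i \<Rightarrow> 'a point \<Rightarrow> 'a point" and \<theta> F where
    bas: "\<forall>\<eta><\<theta>. is_basic_twist (\<sigma> \<eta>)" and run: "is_run \<sigma> \<theta> f_solved F" and Ft: "F \<theta> = f"
    using acc unfolding accessible_def by blast
  have "(\<exists>ms. jok ms \<and> (\<forall>d\<in>C. F \<theta> d = f_solved (iperm ms d))) \<or> (\<exists>d\<in>C. F \<theta> d = NaC)"
    using run_inv[OF fin clos run bas] by simp
  moreover have "\<not> (\<exists>d\<in>C. F \<theta> d = NaC)" using lg cells Ft unfolding legal_def by auto
  ultimately obtain ms0 where ms0: "jok ms0" "\<forall>d\<in>C. f d = f_solved (iperm ms0 d)" using Ft by auto
  have cnt: "\<forall>k. card {p\<in>C. f p = k} = card {p\<in>C. f_solved p = k}"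
  proof
    fix k
    have "{p\<in>C. f p = k} = {p\<in>C. f_solved (iperm ms0 p) = k}" using ms0 by auto
    also have "card \<dots> = card {p\<in>C. f_solved p = k}"
      by (rule count_perm[OF fin clos_iperm[OF clos] clos_iperm[OF clos] iperm_winv2[OF ms0(1)] iperm_winv1[OF ms0(1)]])
    finally show "card {p\<in>C. f p = k} = card {p\<in>C. f_solved p = k}" .
  qed
  have "\<exists>V\<in>{V. Rc \<alpha> \<beta> V}. (\<forall>p. p \<notin> C \<longrightarrow> V p = p) \<and> (\<forall>d\<in>C. V d \<in> C \<and> f (V d) = f_solved d)"
    by (rule sort_lemma[OF fin _ _ _ partner cnt]) (auto intro: Rc_comp Rc_id cyc)
  then obtain V where V: "Rc \<alpha> \<beta> V" "\<forall>p. p \<notin> C \<longrightarrow> V p = p" "\<forall>d\<in>C. V d \<in> C \<and> f (V d) = f_solved d"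
    by blast
  obtain ms where ms: "allowed \<alpha> \<beta> ms" "\<forall>p. is_cell p \<longrightarrow> iperm ms p = V p"
    using V(1) unfolding Rc_def by blast
  have ap: "apply_seq (map tw ms) f = f \<circ> iperm ms" using apply_seq_iperm[OF allowed_jok[OF ms(1)]] .
  show ?thesis
  proof (intro exI[of _ "map tw ms"] conjI)
    show "\<forall>\<sigma>\<in>set (map tw ms). is_face_twist \<sigma> \<or>
               (\<exists>i \<gamma> j. \<gamma> \<in> {\<alpha>, cneg \<alpha>, \<beta>, cneg \<beta>} \<and> j \<in> {1,2,3} \<and>
                        \<sigma> = basic_twist_of i \<gamma> j)"
    proof
      fix \<sigma> assume "\<sigma> \<in> set (map tw ms)"
      then obtain i a j where m: "(i, a, j) \<in> set ms" "\<sigma> = basic_twist_of i a j"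
        by (auto simp: tw_def)
      have j: "j \<in> {1,2,3}" and a: "a \<in> {PInf, NInf, \<alpha>, cneg \<alpha>, \<beta>, cneg \<beta>}"
        using ms(1) m(1) unfolding allowed_def by auto
      show "is_face_twist \<sigma> \<or>
               (\<exists>i \<gamma> j. \<gamma> \<in> {\<alpha>, cneg \<alpha>, \<beta>, cneg \<beta>} \<and> j \<in> {1,2,3} \<and>
                        \<sigma> = basic_twist_of i \<gamma> j)"
      proof (cases "a \<in> {PInf, NInf}")
        case True
        then have "is_face_twist \<sigma>" unfolding is_face_twist_def using j m(2) by blast
        then show ?thesis ..
      next
        case False
        then have "a \<in> {\<alpha>, cneg \<alpha>, \<beta>, cneg \<beta>}" using a by auto
        then show ?thesis using j m(2) by blast
      qed
    qed
    show "\<forall>d\<in>C. apply_seq (map tw ms) f d = f_solved d"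
    proof
      fix d assume d: "d \<in> C"
      then have "iperm ms d = V d" using ms(2) cells by blast
      then show "apply_seq (map tw ms) f d = f_solved d" using ap V(3) d by simp
    qed
    show "\<forall>d. is_cell d \<and> d \<notin> C \<longrightarrow> apply_seq (map tw ms) f d = f d"
    proof (intro allI impI)
      fix d :: "'a point" assume d: "is_cell d \<and> d \<notin> C"
      then have "iperm ms d = V d" using ms(2) by blast
      then show "apply_seq (map tw ms) f d = f d" using ap V(2) d by simp
    qed
  qed
qed

lemma ccases1: "x = Pos r \<or> x = Neg r \<or> x = Zero \<or> x = PInf \<or> x = NInf \<or>
   (x \<noteq> Pos r \<and> x \<noteq> Neg r \<and> x \<noteq> Zero \<and> x \<noteq> PInf \<and> x \<noteq> NInf)"
  by blast

lemma ccases2: "x = Pos r \<or> x = Neg r \<or> x = Pos s \<or> x = Neg s \<or> x = Zero \<or> x = PInf \<or> x = NInf \<or>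
   (x \<noteq> Pos r \<and> x \<noteq> Neg r \<and> x \<noteq> Pos s \<and> x \<noteq> Neg s \<and> x \<noteq> Zero \<and> x \<noteq> PInf \<and> x \<noteq> NInf)"
  by blast

definition prt :: "'a point \<Rightarrow> 'a point" where
  "prt p = (case p of (x, y, z) \<Rightarrow> if is_inf z then (cneg x, cneg y, z)
      else if is_inf y then (cneg x, y, cneg z) else (x, cneg y, cneg z))"

lemma inv_qturn: "inv (qturn i a) p = qturn i a (qturn i a (qturn i a p))"
  by (metis q4 qturn_inv2 qturn_inv)

lemma five_aux:
  assumes "e1 \<in> C" "e2 \<in> C" "e3 \<in> C" "distinct [a, b, e1, e2, e3]"
  shows "\<exists>w\<in>C. w \<notin> {a, b, y, z}"
proof (cases "e1 \<in> {y, z}")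
  case False then show ?thesis using assms by auto
next
  case True
  show ?thesis
  proof (cases "e2 \<in> {y, z}")
    case False then show ?thesis using assms by auto
  next
    case True2: True
    then have "e3 \<notin> {y, z}" using True assms by auto
    then show ?thesis using assms by auto
  qed
qed


definition S_zero :: "'a \<Rightarrow> 'a point set" where
  "S_zero r = {(NInf, Zero, (Neg r)), (NInf, Zero, (Pos r)), (NInf, (Neg r), Zero), (NInf, (Pos r), Zero), (PInf, Zero, (Neg r)), (PInf, Zero, (Pos r)), (PInf, (Neg r), Zero), (PInf, (Pos r), Zero), (Zero, NInf, (Neg r)), (Zero, NInf, (Pos r)), (Zero, PInf, (Neg r)), (Zero, PInf, (Pos r)), (Zero, (Neg r), NInf), (Zero, (Neg r), PInf), (Zero, (Pos r), NInf), (Zero, (Pos r), PInf), ((Neg r), NInf, Zero), ((Neg r), PInf, Zero), ((Neg r), Zero, NInf), ((Neg r), Zero, PInf), ((Pos r), NInf, Zero), ((Pos r), PInf, Zero), ((Pos r), Zero, NInf), ((Pos r), Zero, PInf)}"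

lemma S_zero_clos:
  shows "d \<in> S_zero r \<Longrightarrow> qturn i a d \<in> S_zero r"
  unfolding S_zero_def by (cases i; elim insertE emptyE; simp)

lemma S_zero_sub:
  shows "S_zero r \<subseteq> cluster ((Pos r), Zero, PInf)"
proof -
  have c0: "((Pos r), Zero, PInf) \<in> cluster ((Pos r), Zero, PInf)" by (rule cluster.base)
  have c1: "((Pos r), NInf, Zero) \<in> cluster ((Pos r), Zero, PInf)" using cluster.fwd[OF c0, of AX "(Pos r)"] by simp
  have c2: "(PInf, Zero, (Neg r)) \<in> cluster ((Pos r), Zero, PInf)" using cluster.fwd[OF c0, of AY "Zero"] by simp
  have c3: "(Zero, (Pos r), PInf) \<in> cluster ((Pos r), Zero, PInf)" using cluster.fwd[OF c0, of AZ "PInf"] by simp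
  have c4: "((Pos r), Zero, NInf) \<in> cluster ((Pos r), Zero, PInf)" using cluster.fwd[OF c1, of AX "(Pos r)"] by simp
  have c5: "(Zero, NInf, (Neg r)) \<in> cluster ((Pos r), Zero, PInf)" using cluster.fwd[OF c1, of AY "NInf"] by simp
  have c6: "(PInf, (Pos r), Zero) \<in> cluster ((Pos r), Zero, PInf)" using cluster.fwd[OF c1, of AZ "Zero"] by simp
  have c7: "((Neg r), Zero, NInf) \<in> cluster ((Pos r), Zero, PInf)" using cluster.fwd[OF c2, of AY "Zero"] by simp
  have c8: "(Zero, PInf, (Neg r)) \<in> cluster ((Pos r), Zero, PInf)" using cluster.fwd[OF c2, of AZ "(Neg r)"] by simp
  have c9: "(Zero, NInf, (Pos r)) \<in> cluster ((Pos r), Zero, PInf)" using cluster.fwd[OF c3, of AX "Zero"] by simp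
  have c10: "((Neg r), Zero, PInf) \<in> cluster ((Pos r), Zero, PInf)" using cluster.fwd[OF c3, of AZ "PInf"] by simp
  have c11: "((Pos r), PInf, Zero) \<in> cluster ((Pos r), Zero, PInf)" using cluster.fwd[OF c4, of AX "(Pos r)"] by simp
  have c12: "(NInf, Zero, (Neg r)) \<in> cluster ((Pos r), Zero, PInf)" using cluster.fwd[OF c4, of AY "Zero"] by simp
  have c13: "(Zero, (Pos r), NInf) \<in> cluster ((Pos r), Zero, PInf)" using cluster.fwd[OF c4, of AZ "NInf"] by simp
  have c14: "((Neg r), NInf, Zero) \<in> cluster ((Pos r), Zero, PInf)" using cluster.fwd[OF c5, of AY "NInf"] by simp
  have c15: "(PInf, Zero, (Pos r)) \<in> cluster ((Pos r), Zero, PInf)" using cluster.fwd[OF c6, of AX "PInf"] by simp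
  have c16: "((Neg r), PInf, Zero) \<in> cluster ((Pos r), Zero, PInf)" using cluster.fwd[OF c6, of AZ "Zero"] by simp
  have c17: "(NInf, Zero, (Pos r)) \<in> cluster ((Pos r), Zero, PInf)" using cluster.fwd[OF c7, of AY "Zero"] by simp
  have c18: "(Zero, (Neg r), NInf) \<in> cluster ((Pos r), Zero, PInf)" using cluster.fwd[OF c7, of AZ "NInf"] by simp
  have c19: "(Zero, (Neg r), PInf) \<in> cluster ((Pos r), Zero, PInf)" using cluster.fwd[OF c10, of AZ "PInf"] by simp
  have c20: "(NInf, (Pos r), Zero) \<in> cluster ((Pos r), Zero, PInf)" using cluster.fwd[OF c11, of AZ "Zero"] by simp
  have c21: "(Zero, PInf, (Pos r)) \<in> cluster ((Pos r), Zero, PInf)" using cluster.fwd[OF c13, of AX "Zero"] by simp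
  have c22: "(PInf, (Neg r), Zero) \<in> cluster ((Pos r), Zero, PInf)" using cluster.fwd[OF c14, of AZ "Zero"] by simp
  have c23: "(NInf, (Neg r), Zero) \<in> cluster ((Pos r), Zero, PInf)" using cluster.fwd[OF c16, of AZ "Zero"] by simp
  show ?thesis unfolding S_zero_def using c0 c1 c2 c3 c4 c5 c6 c7 c8 c9 c10 c11 c12 c13 c14 c15 c16 c17 c18 c19 c20 c21 c22 c23 by simp
qed

lemma S_zero_eq:
  shows "cluster ((Pos r), Zero, PInf) = S_zero r"
proof
  show "cluster ((Pos r), Zero, PInf) \<subseteq> S_zero r"
  proof
    fix d assume "d \<in> cluster ((Pos r), Zero, PInf)"
    then show "d \<in> S_zero r"
    proof (induction d rule: cluster.induct)
      case base then show ?case by (simp add: S_zero_def)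
    next
      case (fwd d i a) then show ?case by (simp add: S_zero_clos)
    next
      case (bwd d i a) then show ?case by (simp add: inv_qturn S_zero_clos)
    qed
  qed
  show "S_zero r \<subseteq> cluster ((Pos r), Zero, PInf)" by (rule S_zero_sub)
qed

lemma base_zero:
  shows "is_cell p \<Longrightarrow> iperm [(AX, PInf, 1), (AY, (Pos r), 1), (AX, Zero, 1), (AY, (Pos r), 3), (AX, PInf, 3), (AY, (Pos r), 1), (AX, Zero, 3), (AY, (Pos r), 3)] p = cyc3 (Zero, NInf, (Neg r)) (PInf, (Pos r), Zero) (PInf, Zero, (Neg r)) p"
proof -
  assume c: "is_cell p"
  obtain x y z where p: "p = (x, y, z)" by (cases p) auto
  show ?thesis using ccases1[of x r] ccases1[of y r] ccases1[of z r] c unfolding p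
    by (elim disjE) (simp_all add: cyc3_def is_cell_def is_inf_def)
qed

lemma cj_zero:
  shows "Rc (Pos r) Zero (cyc3 ((Pos r), Zero, PInf) (Zero, NInf, (Neg r)) (NInf, Zero, (Neg r))) \<and> Rc (Pos r) Zero (cyc3 ((Pos r), Zero, PInf) (Zero, NInf, (Neg r)) (NInf, Zero, (Pos r))) \<and> Rc (Pos r) Zero (cyc3 ((Pos r), Zero, PInf) (Zero, NInf, (Neg r)) (NInf, (Neg r), Zero)) \<and> Rc (Pos r) Zero (cyc3 ((Pos r), Zero, PInf) (Zero, NInf, (Neg r)) (NInf, (Pos r), Zero)) \<and> Rc (Pos r) Zero (cyc3 ((Pos r), Zero, PInf) (Zero, NInf, (Neg r)) (PInf, Zero, (Neg r))) \<and> Rc (Pos r) Zero (cyc3 ((Pos r), Zero, PInf) (Zero, NInf, (Neg r)) (PInf, Zero, (Pos r))) \<and> Rc (Pos r) Zero (cyc3 ((Pos r), Zero, PInf) (Zero, NInf, (Neg r)) (PInf, (Neg r), Zero)) \<and> Rc (Pos r) Zero (cyc3 ((Pos r), Zero, PInf) (Zero, NInf, (Neg r)) (PInf, (Pos r), Zero)) \<and> Rc (Pos r) Zero (cyc3 ((Pos r), Zero, PInf) (Zero, NInf, (Neg r)) (Zero, NInf, (Pos r))) \<and> Rc (Pos r) Zero (cyc3 ((Pos r), Zero, PInf) (Zero, NInf, (Neg r)) (Zero, PInf, (Neg r))) \<and> Rc (Pos r) Zero (cyc3 ((Pos r), Zero, PInf) (Zero, NInf, (Neg r)) (Zero, PInf,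 (Pos r))) \<and> Rc (Pos r) Zero (cyc3 ((Pos r), Zero, PInf) (Zero, NInf, (Neg r)) (Zero, (Neg r), NInf)) \<and> Rc (Pos r) Zero (cyc3 ((Pos r), Zero, PInf) (Zero, NInf, (Neg r)) (Zero, (Neg r), PInf)) \<and> Rc (Pos r) Zero (cyc3 ((Pos r), Zero, PInf) (Zero, NInf, (Neg r)) (Zero, (Pos r), NInf)) \<and> Rc (Pos r) Zero (cyc3 ((Pos r), Zero, PInf) (Zero, NInf, (Neg r)) (Zero, (Pos r), PInf)) \<and> Rc (Pos r) Zero (cyc3 ((Pos r), Zero, PInf) (Zero, NInf, (Neg r)) ((Neg r), NInf, Zero)) \<and> Rc (Pos r) Zero (cyc3 ((Pos r), Zero, PInf) (Zero, NInf, (Neg r)) ((Neg r), PInf, Zero)) \<and> Rc (Pos r) Zero (cyc3 ((Pos r), Zero, PInf) (Zero, NInf, (Neg r)) ((Neg r), Zero, NInf)) \<and> Rc (Pos r) Zero (cyc3 ((Pos r), Zero, PInf) (Zero, NInf, (Neg r)) ((Neg r), Zero, PInf)) \<and> Rc (Pos r) Zero (cyc3 ((Pos r), Zero, PInf) (Zero, NInf, (Neg r)) ((Pos r), NInf, Zero)) \<and> Rc (Pos r) Zero (cyc3 ((Pos r), Zero, PInf) (Zero, NInf, (Neg r)) ((Pos r), PInf, Zero)) \<and> Rc (Pos r) Zero (cyc3 ((Pos r), Zero, PInf) (Zero, NInf, (Neg r)) ((Pos r), Zero, NInf))"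
proof -
  have aB: "allowed (Pos r) Zero [(AX, PInf, 1), (AY, (Pos r), 1), (AX, Zero, 1), (AY, (Pos r), 3), (AX, PInf, 3), (AY, (Pos r), 1), (AX, Zero, 3), (AY, (Pos r), 3)]" by (simp add: allowed_def)
  have B0: "\<And>p. is_cell p \<Longrightarrow> iperm [(AX, PInf, 1), (AY, (Pos r), 1), (AX, Zero, 1), (AY, (Pos r), 3), (AX, PInf, 3), (AY, (Pos r), 1), (AX, Zero, 3), (AY, (Pos r), 3)] p = cyc3 (Zero, NInf, (Neg r)) (PInf, (Pos r), Zero) (PInf, Zero, (Neg r)) p" by (rule base_zero)
  have d: "(Zero, NInf, (Neg r)) \<noteq> (PInf, (Pos r), Zero)" "(PInf, (Pos r), Zero) \<noteq> (PInf, Zero, (Neg r))" "(Zero, NInf, (Neg r)) \<noteq> (PInf, Zero, (Neg r))" by auto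
  have B1: "\<And>p. is_cell p \<Longrightarrow> iperm [(AX, PInf, 1), (AY, (Pos r), 1), (AX, Zero, 1), (AY, (Pos r), 3), (AX, PInf, 3), (AY, (Pos r), 1), (AX, Zero, 3), (AY, (Pos r), 3)] p = cyc3 (PInf, (Pos r), Zero) (PInf, Zero, (Neg r)) (Zero, NInf, (Neg r)) p" using B0 cyc3_rot[OF d] by metis
  have B2: "\<And>p. is_cell p \<Longrightarrow> iperm [(AX, PInf, 1), (AY, (Pos r), 1), (AX, Zero, 1), (AY, (Pos r), 3), (AX, PInf, 3), (AY, (Pos r), 1), (AX, Zero, 3), (AY, (Pos r), 3)] p = cyc3 (PInf, Zero, (Neg r)) (Zero, NInf, (Neg r)) (PInf, (Pos r), Zero) p" using B1 cyc3_rot[of "(PInf, (Pos r), Zero)" "(PInf, Zero, (Neg r))" "(Zero, NInf, (Neg r))"] d by metis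
  have x0: "Rc (Pos r) Zero (cyc3 ((Pos r), Zero, PInf) (Zero, NInf, (Neg r)) (NInf, Zero, (Neg r)))" using Rc_conj[OF aB B1, of "[(AZ, (Neg r), 1), (AZ, PInf, 1), (AY, (Pos r), 1)]"] by (simp add: allowed_def)
  have x1: "Rc (Pos r) Zero (cyc3 ((Pos r), Zero, PInf) (Zero, NInf, (Neg r)) (NInf, Zero, (Pos r)))" using Rc_conj[OF aB B2, of "[(AY, Zero, 1), (AZ, PInf, 1), (AY, (Pos r), 1)]"] by (simp add: allowed_def)
  have x2: "Rc (Pos r) Zero (cyc3 ((Pos r), Zero, PInf) (Zero, NInf, (Neg r)) (NInf, (Neg r), Zero))" using Rc_conj[OF aB B2, of "[(AZ, Zero, 2), (AY, Zero, 1)]"] by (simp add: allowed_def)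
  have x3: "Rc (Pos r) Zero (cyc3 ((Pos r), Zero, PInf) (Zero, NInf, (Neg r)) (NInf, (Pos r), Zero))" using Rc_conj[OF aB B2, of "[(AY, Zero, 1), (AY, (Pos r), 2)]"] by (simp add: allowed_def)
  have x4: "Rc (Pos r) Zero (cyc3 ((Pos r), Zero, PInf) (Zero, NInf, (Neg r)) (PInf, Zero, (Neg r)))" using Rc_conj[OF aB B2, of "[(AX, PInf, 1), (AY, Zero, 1)]"] by (simp add: allowed_def)
  have x5: "Rc (Pos r) Zero (cyc3 ((Pos r), Zero, PInf) (Zero, NInf, (Neg r)) (PInf, Zero, (Pos r)))" using Rc_conj[OF aB B2, of "[(AX, PInf, 3), (AY, Zero, 1)]"] by (simp add: allowed_def)
  have x6: "Rc (Pos r) Zero (cyc3 ((Pos r), Zero, PInf) (Zero, NInf, (Neg r)) (PInf, (Neg r), Zero))" using Rc_conj[OF aB B2, of "[(AX, PInf, 2), (AY, Zero, 1)]"] by (simp add: allowed_def)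
  have x7: "Rc (Pos r) Zero (cyc3 ((Pos r), Zero, PInf) (Zero, NInf, (Neg r)) (PInf, (Pos r), Zero))" using Rc_conj[OF aB B2, of "[(AY, Zero, 1)]"] by (simp add: allowed_def)
  have x8: "Rc (Pos r) Zero (cyc3 ((Pos r), Zero, PInf) (Zero, NInf, (Neg r)) (Zero, NInf, (Pos r)))" using Rc_conj[OF aB B2, of "[(AZ, (Pos r), 1), (AX, PInf, 3), (AY, Zero, 1)]"] by (simp add: allowed_def)
  have x9: "Rc (Pos r) Zero (cyc3 ((Pos r), Zero, PInf) (Zero, NInf, (Neg r)) (Zero, PInf, (Neg r)))" using Rc_conj[OF aB B2, of "[(AY, PInf, 1), (AZ, Zero, 3), (AY, Zero, 1)]"] by (simp add: allowed_def)
  have x10: "Rc (Pos r) Zero (cyc3 ((Pos r), Zero, PInf) (Zero, NInf, (Neg r)) (Zero, PInf, (Pos r)))" using Rc_conj[OF aB B2, of "[(AZ, (Pos r), 3), (AX, PInf, 3), (AY, Zero, 1)]"] by (simp add: allowed_def)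
  have x11: "Rc (Pos r) Zero (cyc3 ((Pos r), Zero, PInf) (Zero, NInf, (Neg r)) (Zero, (Neg r), NInf))" using Rc_conj[OF aB B2, of "[(AZ, NInf, 2), (AY, Zero, 1), (AY, (Pos r), 3)]"] by (simp add: allowed_def)
  have x12: "Rc (Pos r) Zero (cyc3 ((Pos r), Zero, PInf) (Zero, NInf, (Neg r)) (Zero, (Neg r), PInf))" using Rc_conj[OF aB B2, of "[(AY, Zero, 1), (AZ, PInf, 2), (AY, (Pos r), 1)]"] by (simp add: allowed_def)
  have x13: "Rc (Pos r) Zero (cyc3 ((Pos r), Zero, PInf) (Zero, NInf, (Neg r)) (Zero, (Pos r), NInf))" using Rc_conj[OF aB B2, of "[(AY, Zero, 1), (AY, (Pos r), 3)]"] by (simp add: allowed_def)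
  have x14: "Rc (Pos r) Zero (cyc3 ((Pos r), Zero, PInf) (Zero, NInf, (Neg r)) (Zero, (Pos r), PInf))" using Rc_conj[OF aB B2, of "[(AY, Zero, 1), (AY, (Pos r), 1)]"] by (simp add: allowed_def)
  have x15: "Rc (Pos r) Zero (cyc3 ((Pos r), Zero, PInf) (Zero, NInf, (Neg r)) ((Neg r), NInf, Zero))" using Rc_conj[OF aB B2, of "[(AZ, Zero, 3), (AY, Zero, 1), (AY, (Pos r), 2)]"] by (simp add: allowed_def)
  have x16: "Rc (Pos r) Zero (cyc3 ((Pos r), Zero, PInf) (Zero, NInf, (Neg r)) ((Neg r), PInf, Zero))" using Rc_conj[OF aB B2, of "[(AZ, Zero, 3), (AY, Zero, 1)]"] by (simp add: allowed_def)
  have x17: "Rc (Pos r) Zero (cyc3 ((Pos r), Zero, PInf) (Zero, NInf, (Neg r)) ((Neg r), Zero, NInf))" using Rc_conj[OF aB B2, of "[(AY, Zero, 1), (AX, NInf, 3), (AY, (Pos r), 2)]"] by (simp add: allowed_def)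
  have x18: "Rc (Pos r) Zero (cyc3 ((Pos r), Zero, PInf) (Zero, NInf, (Neg r)) ((Neg r), Zero, PInf))" using Rc_conj[OF aB B2, of "[(AX, (Neg r), 3), (AZ, Zero, 3), (AY, Zero, 1)]"] by (simp add: allowed_def)
  have x19: "Rc (Pos r) Zero (cyc3 ((Pos r), Zero, PInf) (Zero, NInf, (Neg r)) ((Pos r), NInf, Zero))" using Rc_conj[OF aB B2, of "[(AZ, Zero, 1), (AY, Zero, 1)]"] by (simp add: allowed_def)
  have x20: "Rc (Pos r) Zero (cyc3 ((Pos r), Zero, PInf) (Zero, NInf, (Neg r)) ((Pos r), PInf, Zero))" using Rc_conj[OF aB B2, of "[(AZ, Zero, 1), (AY, Zero, 1), (AY, (Pos r), 2)]"] by (simp add: allowed_def)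
  have x21: "Rc (Pos r) Zero (cyc3 ((Pos r), Zero, PInf) (Zero, NInf, (Neg r)) ((Pos r), Zero, NInf))" using Rc_conj[OF aB B1, of "[(AY, Zero, 1), (AX, PInf, 1), (AZ, (Neg r), 1)]"] by (simp add: allowed_def)
  show ?thesis using x0 x1 x2 x3 x4 x5 x6 x7 x8 x9 x10 x11 x12 x13 x14 x15 x16 x17 x18 x19 x20 x21 by simp
qed

lemma good_zero:
  shows "good (Pos r) Zero (cluster ((Pos r), Zero, PInf))"
proof -
  have E: "cluster ((Pos r), Zero, PInf) = S_zero r" by (rule S_zero_eq)
  have fin: "finite (S_zero r)" by (simp add: S_zero_def)
  have cells: "\<forall>d\<in>S_zero r. is_cell d" by (auto simp: S_zero_def is_cell_def is_inf_def)
  have clos: "\<forall>d\<in>S_zero r. \<forall>i a. qturn i a d \<in> S_zero r" by (simp add: S_zero_clos)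
  have part: "\<forall>d\<in>S_zero r. \<exists>d'\<in>S_zero r. d' \<noteq> d \<and> f_solved d' = f_solved d"
  proof
    fix d assume "d \<in> S_zero r"
    then have "prt d \<in> S_zero r \<and> prt d \<noteq> d \<and> f_solved (prt d) = f_solved d"
      unfolding S_zero_def by (elim insertE emptyE; simp add: prt_def f_solved_def is_cell_def is_inf_def)
    then show "\<exists>d'\<in>S_zero r. d' \<noteq> d \<and> f_solved d' = f_solved d" by blast
  qed
  have ab: "((Pos r), Zero, PInf) \<in> S_zero r" "(Zero, NInf, (Neg r)) \<in> S_zero r" "((Pos r), Zero, PInf) \<noteq> (Zero, NInf, (Neg r))" by (auto simp: S_zero_def)
  have bs: "\<And>x. x \<in> S_zero r \<Longrightarrow> x \<noteq> ((Pos r), Zero, PInf) \<Longrightarrow> x \<noteq> (Zero, NInf, (Neg r)) \<Longrightarrow> cyc3 ((Pos r), Zero, PInf) (Zero, NInf, (Neg r)) x \<in> {V. Rc (Pos r) Zero V}"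
    using cj_zero[of r] unfolding S_zero_def mem_Collect_eq by (elim insertE emptyE; simp)
  have es: "(NInf, Zero, (Neg r)) \<in> S_zero r" "(NInf, Zero, (Pos r)) \<in> S_zero r" "(NInf, (Neg r), Zero) \<in> S_zero r" by (auto simp: S_zero_def)
  have ed: "distinct [((Pos r), Zero, PInf), (Zero, NInf, (Neg r)), (NInf, Zero, (Neg r)), (NInf, Zero, (Pos r)), (NInf, (Neg r), Zero)]" by auto
  have five: "\<And>y z. \<exists>w\<in>S_zero r. w \<notin> {((Pos r), Zero, PInf), (Zero, NInf, (Neg r)), y, z}"
    using five_aux[OF es ed] .
  have cy: "\<forall>x\<in>S_zero r. \<forall>y\<in>S_zero r. \<forall>z\<in>S_zero r. x \<noteq> y \<longrightarrow> y \<noteq> z \<longrightarrow> x \<noteq> z \<longrightarrow> Rc (Pos r) Zero (cyc3 x y z)"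
  proof (intro ballI impI)
    have cmp: "\<And>V W. V \<in> {V. Rc (Pos r) Zero V} \<Longrightarrow> W \<in> {V. Rc (Pos r) Zero V} \<Longrightarrow> V \<circ> W \<in> {V. Rc (Pos r) Zero V}" by (simp add: Rc_comp)
    fix x y z assume asm: "x \<in> S_zero r" "y \<in> S_zero r" "z \<in> S_zero r" "x \<noteq> y" "y \<noteq> z" "x \<noteq> z"
    have "cyc3 x y z \<in> {V. Rc (Pos r) Zero V}" by (rule all3[OF cmp ab bs five asm])
    then show "Rc (Pos r) Zero (cyc3 x y z)" by simp
  qed
  show ?thesis unfolding good_def E by (intro conjI fin cells clos part cy)
qed


definition S_eq :: "'a \<Rightarrow> 'a point set" where
  "S_eq r = {(NInf, (Neg r), (Neg r)), (NInf, (Neg r), (Pos r)), (NInf, (Pos r), (Neg r)), (NInf, (Pos r), (Pos r)), (PInf, (Neg r), (Neg r)), (PInf, (Neg r), (Pos r)), (PInf, (Pos r), (Neg r)), (PInf, (Pos r), (Pos r)), ((Neg r), NInf, (Neg r)), ((Neg r), NInf, (Pos r)), ((Neg r), PInf, (Neg r)), ((Neg r), PInf, (Pos r)), ((Neg r), (Neg r), NInf), ((Neg r), (Neg r), PInf), ((Neg r), (Pos r), NInf), ((Neg r), (Pos r), PInf), ((Pos r), NInf, (Neg r)), ((Pos r), NInf, (Pos r)), ((Pos r), PInf, (Neg r)), ((Pos r), PInf, (Pos r)), ((Pos r), (Neg r), NInf), ((Pos r), (Neg r), PInf), ((Pos r), (Pos r), NInf), ((Pos r), (Pos r), PInf)}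"

lemma S_eq_clos:
  shows "d \<in> S_eq r \<Longrightarrow> qturn i a d \<in> S_eq r"
  unfolding S_eq_def by (cases i; elim insertE emptyE; simp)

lemma S_eq_sub:
  shows "S_eq r \<subseteq> cluster ((Pos r), (Pos r), PInf)"
proof -
  have c0: "((Pos r), (Pos r), PInf) \<in> cluster ((Pos r), (Pos r), PInf)" by (rule cluster.base)
  have c1: "((Pos r), NInf, (Pos r)) \<in> cluster ((Pos r), (Pos r), PInf)" using cluster.fwd[OF c0, of AX "(Pos r)"] by simp
  have c2: "(PInf, (Pos r), (Neg r)) \<in> cluster ((Pos r), (Pos r), PInf)" using cluster.fwd[OF c0, of AY "(Pos r)"] by simp
  have c3: "((Neg r), (Pos r), PInf) \<in> cluster ((Pos r), (Pos r), PInf)" using cluster.fwd[OF c0, of AZ "PInf"] by simp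
  have c4: "((Pos r), (Neg r), NInf) \<in> cluster ((Pos r), (Pos r), PInf)" using cluster.fwd[OF c1, of AX "(Pos r)"] by simp
  have c5: "((Pos r), NInf, (Neg r)) \<in> cluster ((Pos r), (Pos r), PInf)" using cluster.fwd[OF c1, of AY "NInf"] by simp
  have c6: "(PInf, (Pos r), (Pos r)) \<in> cluster ((Pos r), (Pos r), PInf)" using cluster.fwd[OF c1, of AZ "(Pos r)"] by simp
  have c7: "((Neg r), (Pos r), NInf) \<in> cluster ((Pos r), (Pos r), PInf)" using cluster.fwd[OF c2, of AY "(Pos r)"] by simp
  have c8: "((Neg r), PInf, (Neg r)) \<in> cluster ((Pos r), (Pos r), PInf)" using cluster.fwd[OF c2, of AZ "(Neg r)"] by simp
  have c9: "((Neg r), NInf, (Pos r)) \<in> cluster ((Pos r), (Pos r), PInf)" using cluster.fwd[OF c3, of AX "(Neg r)"] by simp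
  have c10: "((Neg r), (Neg r), PInf) \<in> cluster ((Pos r), (Pos r), PInf)" using cluster.fwd[OF c3, of AZ "PInf"] by simp
  have c11: "((Pos r), PInf, (Neg r)) \<in> cluster ((Pos r), (Pos r), PInf)" using cluster.fwd[OF c4, of AX "(Pos r)"] by simp
  have c12: "(NInf, (Neg r), (Neg r)) \<in> cluster ((Pos r), (Pos r), PInf)" using cluster.fwd[OF c4, of AY "(Neg r)"] by simp
  have c13: "((Pos r), (Pos r), NInf) \<in> cluster ((Pos r), (Pos r), PInf)" using cluster.fwd[OF c4, of AZ "NInf"] by simp
  have c14: "((Neg r), NInf, (Neg r)) \<in> cluster ((Pos r), (Pos r), PInf)" using cluster.fwd[OF c5, of AY "NInf"] by simp
  have c15: "(PInf, (Neg r), (Pos r)) \<in> cluster ((Pos r), (Pos r), PInf)" using cluster.fwd[OF c6, of AX "PInf"] by simp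
  have c16: "((Neg r), PInf, (Pos r)) \<in> cluster ((Pos r), (Pos r), PInf)" using cluster.fwd[OF c6, of AZ "(Pos r)"] by simp
  have c17: "(NInf, (Pos r), (Pos r)) \<in> cluster ((Pos r), (Pos r), PInf)" using cluster.fwd[OF c7, of AY "(Pos r)"] by simp
  have c18: "((Neg r), (Neg r), NInf) \<in> cluster ((Pos r), (Pos r), PInf)" using cluster.fwd[OF c7, of AZ "NInf"] by simp
  have c19: "((Pos r), (Neg r), PInf) \<in> cluster ((Pos r), (Pos r), PInf)" using cluster.fwd[OF c10, of AZ "PInf"] by simp
  have c20: "(NInf, (Pos r), (Neg r)) \<in> cluster ((Pos r), (Pos r), PInf)" using cluster.fwd[OF c11, of AZ "(Neg r)"] by simp
  have c21: "((Pos r), PInf, (Pos r)) \<in> cluster ((Pos r), (Pos r), PInf)" using cluster.fwd[OF c13, of AX "(Pos r)"] by simp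
  have c22: "(PInf, (Neg r), (Neg r)) \<in> cluster ((Pos r), (Pos r), PInf)" using cluster.fwd[OF c14, of AZ "(Neg r)"] by simp
  have c23: "(NInf, (Neg r), (Pos r)) \<in> cluster ((Pos r), (Pos r), PInf)" using cluster.fwd[OF c16, of AZ "(Pos r)"] by simp
  show ?thesis unfolding S_eq_def using c0 c1 c2 c3 c4 c5 c6 c7 c8 c9 c10 c11 c12 c13 c14 c15 c16 c17 c18 c19 c20 c21 c22 c23 by simp
qed

lemma S_eq_eq:
  shows "cluster ((Pos r), (Pos r), PInf) = S_eq r"
proof
  show "cluster ((Pos r), (Pos r), PInf) \<subseteq> S_eq r"
  proof
    fix d assume "d \<in> cluster ((Pos r), (Pos r), PInf)"
    then show "d \<in> S_eq r"
    proof (induction d rule: cluster.induct)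
      case base then show ?case by (simp add: S_eq_def)
    next
      case (fwd d i a) then show ?case by (simp add: S_eq_clos)
    next
      case (bwd d i a) then show ?case by (simp add: inv_qturn S_eq_clos)
    qed
  qed
  show "S_eq r \<subseteq> cluster ((Pos r), (Pos r), PInf)" by (rule S_eq_sub)
qed

lemma base_eq:
  shows "is_cell p \<Longrightarrow> iperm [(AX, PInf, 1), (AY, (Pos r), 1), (AX, (Pos r), 1), (AY, (Pos r), 3), (AX, PInf, 3), (AY, (Pos r), 1), (AX, (Pos r), 3), (AY, (Pos r), 3)] p = cyc3 ((Pos r), NInf, (Neg r)) (PInf, (Pos r), (Pos r)) (PInf, (Pos r), (Neg r)) p"
proof -
  assume c: "is_cell p"
  obtain x y z where p: "p = (x, y, z)" by (cases p) auto
  show ?thesis using ccases1[of x r] ccases1[of y r] ccases1[of z r] c unfolding p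
    by (elim disjE) (simp_all add: cyc3_def is_cell_def is_inf_def)
qed

lemma cj_eq:
  shows "Rc (Pos r) (Pos r) (cyc3 ((Pos r), (Pos r), PInf) ((Pos r), NInf, (Neg r)) (NInf, (Neg r), (Neg r))) \<and> Rc (Pos r) (Pos r) (cyc3 ((Pos r), (Pos r), PInf) ((Pos r), NInf, (Neg r)) (NInf, (Neg r), (Pos r))) \<and> Rc (Pos r) (Pos r) (cyc3 ((Pos r), (Pos r), PInf) ((Pos r), NInf, (Neg r)) (NInf, (Pos r), (Neg r))) \<and> Rc (Pos r) (Pos r) (cyc3 ((Pos r), (Pos r), PInf) ((Pos r), NInf, (Neg r)) (NInf, (Pos r), (Pos r))) \<and> Rc (Pos r) (Pos r) (cyc3 ((Pos r), (Pos r), PInf) ((Pos r), NInf, (Neg r)) (PInf, (Neg r), (Neg r))) \<and> Rc (Pos r) (Pos r) (cyc3 ((Pos r), (Pos r), PInf) ((Pos r), NInf, (Neg r)) (PInf, (Neg r), (Pos r))) \<and> Rc (Pos r) (Pos r) (cyc3 ((Pos r), (Pos r), PInf) ((Pos r), NInf, (Neg r)) (PInf, (Pos r), (Neg r))) \<and> Rc (Pos r) (Pos r) (cyc3 ((Pos r), (Pos r), PInf) ((Pos r), NInf, (Neg r)) (PInf, (Pos r), (Pos r))) \<and> Rc (Pos r) (Pos r) (cyc3 ((Pos r), (Pos r), PInf) ((Pos r), NInf, (Neg r)) ((Neg r), NInf, (Neg r))) \<and> Rc (Pos r) (Pos r) (cyc3 ((Pos r), (Pos r), PInf) ((Pos r),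 NInf, (Neg r)) ((Neg r), NInf, (Pos r))) \<and> Rc (Pos r) (Pos r) (cyc3 ((Pos r), (Pos r), PInf) ((Pos r), NInf, (Neg r)) ((Neg r), PInf, (Neg r))) \<and> Rc (Pos r) (Pos r) (cyc3 ((Pos r), (Pos r), PInf) ((Pos r), NInf, (Neg r)) ((Neg r), PInf, (Pos r))) \<and> Rc (Pos r) (Pos r) (cyc3 ((Pos r), (Pos r), PInf) ((Pos r), NInf, (Neg r)) ((Neg r), (Neg r), NInf)) \<and> Rc (Pos r) (Pos r) (cyc3 ((Pos r), (Pos r), PInf) ((Pos r), NInf, (Neg r)) ((Neg r), (Neg r), PInf)) \<and> Rc (Pos r) (Pos r) (cyc3 ((Pos r), (Pos r), PInf) ((Pos r), NInf, (Neg r)) ((Neg r), (Pos r), NInf)) \<and> Rc (Pos r) (Pos r) (cyc3 ((Pos r), (Pos r), PInf) ((Pos r), NInf, (Neg r)) ((Neg r), (Pos r), PInf)) \<and> Rc (Pos r) (Pos r) (cyc3 ((Pos r), (Pos r), PInf) ((Pos r), NInf, (Neg r)) ((Pos r), NInf, (Pos r))) \<and> Rc (Pos r) (Pos r) (cyc3 ((Pos r), (Pos r), PInf) ((Pos r), NInf, (Neg r)) ((Pos r), PInf, (Neg r))) \<and> Rc (Pos r) (Pos r) (cyc3 ((Pos r), (Pos r), PInf) ((Pos r), NInf, (Neg r)) ((Pos r), PInf, (Pos r))) \<and> Rc (Pos r) (Pos r) (cyc3 ((Pos r), (Pos r), PInf) ((Pos r), NInf, (Neg r)) ((Pos r), (Neg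 r), NInf)) \<and> Rc (Pos r) (Pos r) (cyc3 ((Pos r), (Pos r), PInf) ((Pos r), NInf, (Neg r)) ((Pos r), (Neg r), PInf)) \<and> Rc (Pos r) (Pos r) (cyc3 ((Pos r), (Pos r), PInf) ((Pos r), NInf, (Neg r)) ((Pos r), (Pos r), NInf))"
proof -
  have aB: "allowed (Pos r) (Pos r) [(AX, PInf, 1), (AY, (Pos r), 1), (AX, (Pos r), 1), (AY, (Pos r), 3), (AX, PInf, 3), (AY, (Pos r), 1), (AX, (Pos r), 3), (AY, (Pos r), 3)]" by (simp add: allowed_def)
  have B0: "\<And>p. is_cell p \<Longrightarrow> iperm [(AX, PInf, 1), (AY, (Pos r), 1), (AX, (Pos r), 1), (AY, (Pos r), 3), (AX, PInf, 3), (AY, (Pos r), 1), (AX, (Pos r), 3), (AY, (Pos r), 3)] p = cyc3 ((Pos r), NInf, (Neg r)) (PInf, (Pos r), (Pos r)) (PInf, (Pos r), (Neg r)) p" by (rule base_eq)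
  have d: "((Pos r), NInf, (Neg r)) \<noteq> (PInf, (Pos r), (Pos r))" "(PInf, (Pos r), (Pos r)) \<noteq> (PInf, (Pos r), (Neg r))" "((Pos r), NInf, (Neg r)) \<noteq> (PInf, (Pos r), (Neg r))" by auto
  have B1: "\<And>p. is_cell p \<Longrightarrow> iperm [(AX, PInf, 1), (AY, (Pos r), 1), (AX, (Pos r), 1), (AY, (Pos r), 3), (AX, PInf, 3), (AY, (Pos r), 1), (AX, (Pos r), 3), (AY, (Pos r), 3)] p = cyc3 (PInf, (Pos r), (Pos r)) (PInf, (Pos r), (Neg r)) ((Pos r), NInf, (Neg r)) p" using B0 cyc3_rot[OF d] by metis
  have B2: "\<And>p. is_cell p \<Longrightarrow> iperm [(AX, PInf, 1), (AY, (Pos r), 1), (AX, (Pos r), 1), (AY, (Pos r), 3), (AX, PInf, 3), (AY, (Pos r), 1), (AX, (Pos r), 3), (AY, (Pos r), 3)] p = cyc3 (PInf, (Pos r), (Neg r)) ((Pos r), NInf, (Neg r)) (PInf, (Pos r), (Pos r)) p" using B1 cyc3_rot[of "(PInf, (Pos r), (Pos r))" "(PInf, (Pos r), (Neg r))" "((Pos r), NInf, (Neg r))"] d by metis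
  have x0: "Rc (Pos r) (Pos r) (cyc3 ((Pos r), (Pos r), PInf) ((Pos r), NInf, (Neg r)) (NInf, (Neg r), (Neg r)))" using Rc_conj[OF aB B1, of "[(AY, (Pos r), 1), (AX, PInf, 1), (AZ, (Neg r), 1)]"] by (simp add: allowed_def)
  have x1: "Rc (Pos r) (Pos r) (cyc3 ((Pos r), (Pos r), PInf) ((Pos r), NInf, (Neg r)) (NInf, (Neg r), (Pos r)))" using Rc_conj[OF aB B2, of "[(AY, (Pos r), 1), (AZ, (Pos r), 2)]"] by (simp add: allowed_def)
  have x2: "Rc (Pos r) (Pos r) (cyc3 ((Pos r), (Pos r), PInf) ((Pos r), NInf, (Neg r)) (NInf, (Pos r), (Neg r)))" using Rc_conj[OF aB B2, of "[(AX, NInf, 2), (AY, (Pos r), 1), (AZ, (Pos r), 2)]"] by (simp add: allowed_def)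
  have x3: "Rc (Pos r) (Pos r) (cyc3 ((Pos r), (Pos r), PInf) ((Pos r), NInf, (Neg r)) (NInf, (Pos r), (Pos r)))" using Rc_conj[OF aB B2, of "[(AZ, (Pos r), 1), (AX, (Neg r), 3), (AY, (Pos r), 1)]"] by (simp add: allowed_def)
  have x4: "Rc (Pos r) (Pos r) (cyc3 ((Pos r), (Pos r), PInf) ((Pos r), NInf, (Neg r)) (PInf, (Neg r), (Neg r)))" using Rc_conj[OF aB B2, of "[(AY, (Pos r), 3), (AZ, (Pos r), 2), (AX, PInf, 2)]"] by (simp add: allowed_def)
  have x5: "Rc (Pos r) (Pos r) (cyc3 ((Pos r), (Pos r), PInf) ((Pos r), NInf, (Neg r)) (PInf, (Neg r), (Pos r)))" using Rc_conj[OF aB B2, of "[(AZ, PInf, 1), (AY, (Pos r), 1), (AX, PInf, 3)]"] by (simp add: allowed_def)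
  have x6: "Rc (Pos r) (Pos r) (cyc3 ((Pos r), (Pos r), PInf) ((Pos r), NInf, (Neg r)) (PInf, (Pos r), (Neg r)))" using Rc_conj[OF aB B2, of "[(AZ, PInf, 3), (AY, (Neg r), 1), (AX, PInf, 1)]"] by (simp add: allowed_def)
  have x7: "Rc (Pos r) (Pos r) (cyc3 ((Pos r), (Pos r), PInf) ((Pos r), NInf, (Neg r)) (PInf, (Pos r), (Pos r)))" using Rc_conj[OF aB B2, of "[(AZ, (Pos r), 3), (AY, (Pos r), 1), (AZ, (Pos r), 1)]"] by (simp add: allowed_def)
  have x8: "Rc (Pos r) (Pos r) (cyc3 ((Pos r), (Pos r), PInf) ((Pos r), NInf, (Neg r)) ((Neg r), NInf, (Neg r)))" using Rc_conj[OF aB B2, of "[(AY, (Pos r), 1), (AX, (Neg r), 2), (AZ, (Pos r), 3)]"] by (simp add: allowed_def)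
  have x9: "Rc (Pos r) (Pos r) (cyc3 ((Pos r), (Pos r), PInf) ((Pos r), NInf, (Neg r)) ((Neg r), NInf, (Pos r)))" using Rc_conj[OF aB B2, of "[(AX, (Neg r), 3), (AY, (Pos r), 1)]"] by (simp add: allowed_def)
  have x10: "Rc (Pos r) (Pos r) (cyc3 ((Pos r), (Pos r), PInf) ((Pos r), NInf, (Neg r)) ((Neg r), PInf, (Neg r)))" using Rc_conj[OF aB B2, of "[(AX, (Neg r), 1), (AY, (Pos r), 1)]"] by (simp add: allowed_def)
  have x11: "Rc (Pos r) (Pos r) (cyc3 ((Pos r), (Pos r), PInf) ((Pos r), NInf, (Neg r)) ((Neg r), PInf, (Pos r)))" using Rc_conj[OF aB B2, of "[(AY, (Pos r), 1), (AZ, (Pos r), 3)]"] by (simp add: allowed_def)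
  have x12: "Rc (Pos r) (Pos r) (cyc3 ((Pos r), (Pos r), PInf) ((Pos r), NInf, (Neg r)) ((Neg r), (Neg r), NInf))" using Rc_conj[OF aB B2, of "[(AX, (Neg r), 2), (AY, (Pos r), 1)]"] by (simp add: allowed_def)
  have x13: "Rc (Pos r) (Pos r) (cyc3 ((Pos r), (Pos r), PInf) ((Pos r), NInf, (Neg r)) ((Neg r), (Neg r), PInf))" using Rc_conj[OF aB B2, of "[(AY, (Pos r), 1), (AX, (Neg r), 3), (AZ, (Pos r), 3)]"] by (simp add: allowed_def)
  have x14: "Rc (Pos r) (Pos r) (cyc3 ((Pos r), (Pos r), PInf) ((Pos r), NInf, (Neg r)) ((Neg r), (Pos r), NInf))" using Rc_conj[OF aB B0, of "[(AX, (Pos r), 1), (AY, (Pos r), 3), (AY, NInf, 1)]"] by (simp add: allowed_def)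
  have x15: "Rc (Pos r) (Pos r) (cyc3 ((Pos r), (Pos r), PInf) ((Pos r), NInf, (Neg r)) ((Neg r), (Pos r), PInf))" using Rc_conj[OF aB B2, of "[(AY, (Pos r), 1)]"] by (simp add: allowed_def)
  have x16: "Rc (Pos r) (Pos r) (cyc3 ((Pos r), (Pos r), PInf) ((Pos r), NInf, (Neg r)) ((Pos r), NInf, (Pos r)))" using Rc_conj[OF aB B2, of "[(AY, (Pos r), 1), (AZ, (Pos r), 1)]"] by (simp add: allowed_def)
  have x17: "Rc (Pos r) (Pos r) (cyc3 ((Pos r), (Pos r), PInf) ((Pos r), NInf, (Neg r)) ((Pos r), PInf, (Neg r)))" using Rc_conj[OF aB B2, of "[(AY, PInf, 1), (AX, (Neg r), 1), (AY, (Pos r), 1)]"] by (simp add: allowed_def)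
  have x18: "Rc (Pos r) (Pos r) (cyc3 ((Pos r), (Pos r), PInf) ((Pos r), NInf, (Neg r)) ((Pos r), PInf, (Pos r)))" using Rc_conj[OF aB B2, of "[(AY, PInf, 2), (AX, (Neg r), 1), (AY, (Pos r), 1)]"] by (simp add: allowed_def)
  have x19: "Rc (Pos r) (Pos r) (cyc3 ((Pos r), (Pos r), PInf) ((Pos r), NInf, (Neg r)) ((Pos r), (Neg r), NInf))" using Rc_conj[OF aB B2, of "[(AZ, NInf, 3), (AX, (Neg r), 2), (AY, (Pos r), 1)]"] by (simp add: allowed_def)
  have x20: "Rc (Pos r) (Pos r) (cyc3 ((Pos r), (Pos r), PInf) ((Pos r), NInf, (Neg r)) ((Pos r), (Neg r), PInf))" using Rc_conj[OF aB B1, of "[(AZ, (Neg r), 1), (AX, (Pos r), 1), (AZ, (Pos r), 1)]"] by (simp add: allowed_def)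
  have x21: "Rc (Pos r) (Pos r) (cyc3 ((Pos r), (Pos r), PInf) ((Pos r), NInf, (Neg r)) ((Pos r), (Pos r), NInf))" using Rc_conj[OF aB B2, of "[(AZ, NInf, 2), (AX, (Neg r), 2), (AY, (Pos r), 1)]"] by (simp add: allowed_def)
  show ?thesis using x0 x1 x2 x3 x4 x5 x6 x7 x8 x9 x10 x11 x12 x13 x14 x15 x16 x17 x18 x19 x20 x21 by simp
qed

lemma good_eq:
  shows "good (Pos r) (Pos r) (cluster ((Pos r), (Pos r), PInf))"
proof -
  have E: "cluster ((Pos r), (Pos r), PInf) = S_eq r" by (rule S_eq_eq)
  have fin: "finite (S_eq r)" by (simp add: S_eq_def)
  have cells: "\<forall>d\<in>S_eq r. is_cell d" by (auto simp: S_eq_def is_cell_def is_inf_def)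
  have clos: "\<forall>d\<in>S_eq r. \<forall>i a. qturn i a d \<in> S_eq r" by (simp add: S_eq_clos)
  have part: "\<forall>d\<in>S_eq r. \<exists>d'\<in>S_eq r. d' \<noteq> d \<and> f_solved d' = f_solved d"
  proof
    fix d assume "d \<in> S_eq r"
    then have "prt d \<in> S_eq r \<and> prt d \<noteq> d \<and> f_solved (prt d) = f_solved d"
      unfolding S_eq_def by (elim insertE emptyE; simp add: prt_def f_solved_def is_cell_def is_inf_def)
    then show "\<exists>d'\<in>S_eq r. d' \<noteq> d \<and> f_solved d' = f_solved d" by blast
  qed
  have ab: "((Pos r), (Pos r), PInf) \<in> S_eq r" "((Pos r), NInf, (Neg r)) \<in> S_eq r" "((Pos r), (Pos r), PInf) \<noteq> ((Pos r), NInf, (Neg r))" by (auto simp: S_eq_def)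
  have bs: "\<And>x. x \<in> S_eq r \<Longrightarrow> x \<noteq> ((Pos r), (Pos r), PInf) \<Longrightarrow> x \<noteq> ((Pos r), NInf, (Neg r)) \<Longrightarrow> cyc3 ((Pos r), (Pos r), PInf) ((Pos r), NInf, (Neg r)) x \<in> {V. Rc (Pos r) (Pos r) V}"
    using cj_eq[of r] unfolding S_eq_def mem_Collect_eq by (elim insertE emptyE; simp)
  have es: "(NInf, (Neg r), (Neg r)) \<in> S_eq r" "(NInf, (Neg r), (Pos r)) \<in> S_eq r" "(NInf, (Pos r), (Neg r)) \<in> S_eq r" by (auto simp: S_eq_def)
  have ed: "distinct [((Pos r), (Pos r), PInf), ((Pos r), NInf, (Neg r)), (NInf, (Neg r), (Neg r)), (NInf, (Neg r), (Pos r)), (NInf, (Pos r), (Neg r))]" by auto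
  have five: "\<And>y z. \<exists>w\<in>S_eq r. w \<notin> {((Pos r), (Pos r), PInf), ((Pos r), NInf, (Neg r)), y, z}"
    using five_aux[OF es ed] .
  have cy: "\<forall>x\<in>S_eq r. \<forall>y\<in>S_eq r. \<forall>z\<in>S_eq r. x \<noteq> y \<longrightarrow> y \<noteq> z \<longrightarrow> x \<noteq> z \<longrightarrow> Rc (Pos r) (Pos r) (cyc3 x y z)"
  proof (intro ballI impI)
    have cmp: "\<And>V W. V \<in> {V. Rc (Pos r) (Pos r) V} \<Longrightarrow> W \<in> {V. Rc (Pos r) (Pos r) V} \<Longrightarrow> V \<circ> W \<in> {V. Rc (Pos r) (Pos r) V}" by (simp add: Rc_comp)
    fix x y z assume asm: "x \<in> S_eq r" "y \<in> S_eq r" "z \<in> S_eq r" "x \<noteq> y" "y \<noteq> z" "x \<noteq> z"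
    have "cyc3 x y z \<in> {V. Rc (Pos r) (Pos r) V}" by (rule all3[OF cmp ab bs five asm])
    then show "Rc (Pos r) (Pos r) (cyc3 x y z)" by simp
  qed
  show ?thesis unfolding good_def E by (intro conjI fin cells clos part cy)
qed


definition S_gen :: "'a \<Rightarrow> 'a \<Rightarrow> 'a point set" where
  "S_gen r s = {(NInf, (Neg r), (Pos s)), (NInf, (Neg s), (Neg r)), (NInf, (Pos r), (Neg s)), (NInf, (Pos s), (Pos r)), (PInf, (Neg r), (Neg s)), (PInf, (Neg s), (Pos r)), (PInf, (Pos r), (Pos s)), (PInf, (Pos s), (Neg r)), ((Neg r), NInf, (Neg s)), ((Neg r), PInf, (Pos s)), ((Neg r), (Neg s), PInf), ((Neg r), (Pos s), NInf), ((Neg s), NInf, (Pos r)), ((Neg s), PInf, (Neg r)), ((Neg s), (Neg r), NInf), ((Neg s), (Pos r), PInf), ((Pos r), NInf, (Pos s)), ((Pos r), PInf, (Neg s)), ((Pos r), (Neg s), NInf), ((Pos r), (Pos s), PInf), ((Pos s), NInf, (Neg r)), ((Pos s), PInf, (Pos r)), ((Pos s), (Neg r), PInf), ((Pos s), (Pos r), NInf)}"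

lemma S_gen_clos:
  assumes rs: "r \<noteq> s"
  shows "d \<in> S_gen r s \<Longrightarrow> qturn i a d \<in> S_gen r s"
  using rs unfolding S_gen_def by (cases i; elim insertE emptyE; simp)

lemma S_gen_sub:
  assumes rs: "r \<noteq> s"
  shows "S_gen r s \<subseteq> cluster ((Pos r), (Pos s), PInf)"
proof -
  have c0: "((Pos r), (Pos s), PInf) \<in> cluster ((Pos r), (Pos s), PInf)" by (rule cluster.base)
  have c1: "((Pos r), NInf, (Pos s)) \<in> cluster ((Pos r), (Pos s), PInf)" using cluster.fwd[OF c0, of AX "(Pos r)"] rs by simp
  have c2: "(PInf, (Pos s), (Neg r)) \<in> cluster ((Pos r), (Pos s), PInf)" using cluster.fwd[OF c0, of AY "(Pos s)"] rs by simp
  have c3: "((Neg s), (Pos r), PInf) \<in> cluster ((Pos r), (Pos s), PInf)" using cluster.fwd[OF c0, of AZ "PInf"] rs by simp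
  have c4: "((Pos r), (Neg s), NInf) \<in> cluster ((Pos r), (Pos s), PInf)" using cluster.fwd[OF c1, of AX "(Pos r)"] rs by simp
  have c5: "((Pos s), NInf, (Neg r)) \<in> cluster ((Pos r), (Pos s), PInf)" using cluster.fwd[OF c1, of AY "NInf"] rs by simp
  have c6: "(PInf, (Pos r), (Pos s)) \<in> cluster ((Pos r), (Pos s), PInf)" using cluster.fwd[OF c1, of AZ "(Pos s)"] rs by simp
  have c7: "((Neg r), (Pos s), NInf) \<in> cluster ((Pos r), (Pos s), PInf)" using cluster.fwd[OF c2, of AY "(Pos s)"] rs by simp
  have c8: "((Neg s), PInf, (Neg r)) \<in> cluster ((Pos r), (Pos s), PInf)" using cluster.fwd[OF c2, of AZ "(Neg r)"] rs by simp
  have c9: "((Neg s), NInf, (Pos r)) \<in> cluster ((Pos r), (Pos s), PInf)" using cluster.fwd[OF c3, of AX "(Neg s)"] rs by simp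
  have c10: "((Neg r), (Neg s), PInf) \<in> cluster ((Pos r), (Pos s), PInf)" using cluster.fwd[OF c3, of AZ "PInf"] rs by simp
  have c11: "((Pos r), PInf, (Neg s)) \<in> cluster ((Pos r), (Pos s), PInf)" using cluster.fwd[OF c4, of AX "(Pos r)"] rs by simp
  have c12: "(NInf, (Neg s), (Neg r)) \<in> cluster ((Pos r), (Pos s), PInf)" using cluster.fwd[OF c4, of AY "(Neg s)"] rs by simp
  have c13: "((Pos s), (Pos r), NInf) \<in> cluster ((Pos r), (Pos s), PInf)" using cluster.fwd[OF c4, of AZ "NInf"] rs by simp
  have c14: "((Neg r), NInf, (Neg s)) \<in> cluster ((Pos r), (Pos s), PInf)" using cluster.fwd[OF c5, of AY "NInf"] rs by simp
  have c15: "(PInf, (Neg s), (Pos r)) \<in> cluster ((Pos r), (Pos s), PInf)" using cluster.fwd[OF c6, of AX "PInf"] rs by simp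
  have c16: "((Neg r), PInf, (Pos s)) \<in> cluster ((Pos r), (Pos s), PInf)" using cluster.fwd[OF c6, of AZ "(Pos s)"] rs by simp
  have c17: "(NInf, (Pos s), (Pos r)) \<in> cluster ((Pos r), (Pos s), PInf)" using cluster.fwd[OF c7, of AY "(Pos s)"] rs by simp
  have c18: "((Neg s), (Neg r), NInf) \<in> cluster ((Pos r), (Pos s), PInf)" using cluster.fwd[OF c7, of AZ "NInf"] rs by simp
  have c19: "((Pos s), (Neg r), PInf) \<in> cluster ((Pos r), (Pos s), PInf)" using cluster.fwd[OF c10, of AZ "PInf"] rs by simp
  have c20: "(NInf, (Pos r), (Neg s)) \<in> cluster ((Pos r), (Pos s), PInf)" using cluster.fwd[OF c11, of AZ "(Neg s)"] rs by simp
  have c21: "((Pos s), PInf, (Pos r)) \<in> cluster ((Pos r), (Pos s), PInf)" using cluster.fwd[OF c13, of AX "(Pos s)"] rs by simp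
  have c22: "(PInf, (Neg r), (Neg s)) \<in> cluster ((Pos r), (Pos s), PInf)" using cluster.fwd[OF c14, of AZ "(Neg s)"] rs by simp
  have c23: "(NInf, (Neg r), (Pos s)) \<in> cluster ((Pos r), (Pos s), PInf)" using cluster.fwd[OF c16, of AZ "(Pos s)"] rs by simp
  show ?thesis unfolding S_gen_def using c0 c1 c2 c3 c4 c5 c6 c7 c8 c9 c10 c11 c12 c13 c14 c15 c16 c17 c18 c19 c20 c21 c22 c23 by simp
qed

lemma S_gen_eq:
  assumes rs: "r \<noteq> s"
  shows "cluster ((Pos r), (Pos s), PInf) = S_gen r s"
proof
  show "cluster ((Pos r), (Pos s), PInf) \<subseteq> S_gen r s"
  proof
    fix d assume "d \<in> cluster ((Pos r), (Pos s), PInf)"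
    then show "d \<in> S_gen r s"
    proof (induction d rule: cluster.induct)
      case base then show ?case by (simp add: S_gen_def)
    next
      case (fwd d i a) then show ?case by (simp add: S_gen_clos[OF rs])
    next
      case (bwd d i a) then show ?case by (simp add: inv_qturn S_gen_clos[OF rs])
    qed
  qed
  show "S_gen r s \<subseteq> cluster ((Pos r), (Pos s), PInf)" by (rule S_gen_sub[OF rs])
qed

lemma base_gen:
  assumes rs: "r \<noteq> s"
  shows "is_cell p \<Longrightarrow> iperm [(AX, PInf, 1), (AY, (Pos r), 1), (AX, (Pos s), 1), (AY, (Pos r), 3), (AX, PInf, 3), (AY, (Pos r), 1), (AX, (Pos s), 3), (AY, (Pos r), 3)] p = cyc3 ((Pos s), NInf, (Neg r)) (PInf, (Pos r), (Pos s)) (PInf, (Pos s), (Neg r)) p"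
proof -
  assume c: "is_cell p"
  obtain x y z where p: "p = (x, y, z)" by (cases p) auto
  show ?thesis using ccases2[of x r s] ccases2[of y r s] ccases2[of z r s] c rs unfolding p
    by (elim disjE) (simp_all add: cyc3_def is_cell_def is_inf_def)
qed

lemma cj_gen:
  assumes rs: "r \<noteq> s"
  shows "Rc (Pos r) (Pos s) (cyc3 ((Pos r), (Pos s), PInf) ((Pos s), NInf, (Neg r)) (NInf, (Neg r), (Pos s))) \<and> Rc (Pos r) (Pos s) (cyc3 ((Pos r), (Pos s), PInf) ((Pos s), NInf, (Neg r)) (NInf, (Neg s), (Neg r))) \<and> Rc (Pos r) (Pos s) (cyc3 ((Pos r), (Pos s), PInf) ((Pos s), NInf, (Neg r)) (NInf, (Pos r), (Neg s))) \<and> Rc (Pos r) (Pos s) (cyc3 ((Pos r), (Pos s), PInf) ((Pos s), NInf, (Neg r)) (NInf, (Pos s), (Pos r))) \<and> Rc (Pos r) (Pos s) (cyc3 ((Pos r), (Pos s), PInf) ((Pos s), NInf, (Neg r)) (PInf, (Neg r), (Neg s))) \<and> Rc (Pos r) (Pos s) (cyc3 ((Pos r), (Pos s), PInf) ((Pos s), NInf, (Neg r)) (PInf, (Neg s), (Pos r))) \<and> Rc (Pos r) (Pos s) (cyc3 ((Pos r), (Pos s), PInf) ((Pos s), NInf, (Neg r)) (PInf, (Pos r), (Pos s))) \<and> Rc (Pos r) (Pos s) (cyc3 ((Pos r), (Pos s), PInf) ((Pos s), NInf, (Neg r)) (PInf, (Pos s), (Neg r))) \<and> Rc (Pos r) (Pos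 s) (cyc3 ((Pos r), (Pos s), PInf) ((Pos s), NInf, (Neg r)) ((Neg r), NInf, (Neg s))) \<and> Rc (Pos r) (Pos s) (cyc3 ((Pos r), (Pos s), PInf) ((Pos s), NInf, (Neg r)) ((Neg r), PInf, (Pos s))) \<and> Rc (Pos r) (Pos s) (cyc3 ((Pos r), (Pos s), PInf) ((Pos s), NInf, (Neg r)) ((Neg r), (Neg s), PInf)) \<and> Rc (Pos r) (Pos s) (cyc3 ((Pos r), (Pos s), PInf) ((Pos s), NInf, (Neg r)) ((Neg r), (Pos s), NInf)) \<and> Rc (Pos r) (Pos s) (cyc3 ((Pos r), (Pos s), PInf) ((Pos s), NInf, (Neg r)) ((Neg s), NInf, (Pos r))) \<and> Rc (Pos r) (Pos s) (cyc3 ((Pos r), (Pos s), PInf) ((Pos s), NInf, (Neg r)) ((Neg s), PInf, (Neg r))) \<and> Rc (Pos r) (Pos s) (cyc3 ((Pos r), (Pos s), PInf) ((Pos s), NInf, (Neg r)) ((Neg s), (Neg r), NInf)) \<and> Rc (Pos r) (Pos s) (cyc3 ((Pos r), (Pos s), PInf) ((Pos s), NInf, (Neg r)) ((Neg s), (Pos r), PInf)) \<and> Rc (Pos r) (Pos s) (cyc3 ((Pos r), (Pos s), PInf) ((Pos s), NInf, (Neg r)) ((Pos r), NInf, (Pos s))) \<and> Rc (Pos r) (Pos s) (cyc3 ((Pos r), (Pos s), PInf) ((Pos s), NInf, (Neg r)) ((Pos r), PInf, (Neg s))) \<and> Rc (Pos r) (Pos s) (cyc3 ((Pos r), (Pos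 s), PInf) ((Pos s), NInf, (Neg r)) ((Pos r), (Neg s), NInf)) \<and> Rc (Pos r) (Pos s) (cyc3 ((Pos r), (Pos s), PInf) ((Pos s), NInf, (Neg r)) ((Pos s), PInf, (Pos r))) \<and> Rc (Pos r) (Pos s) (cyc3 ((Pos r), (Pos s), PInf) ((Pos s), NInf, (Neg r)) ((Pos s), (Neg r), PInf)) \<and> Rc (Pos r) (Pos s) (cyc3 ((Pos r), (Pos s), PInf) ((Pos s), NInf, (Neg r)) ((Pos s), (Pos r), NInf))"
proof -
  have aB: "allowed (Pos r) (Pos s) [(AX, PInf, 1), (AY, (Pos r), 1), (AX, (Pos s), 1), (AY, (Pos r), 3), (AX, PInf, 3), (AY, (Pos r), 1), (AX, (Pos s), 3), (AY, (Pos r), 3)]" by (simp add: allowed_def)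
  have B0: "\<And>p. is_cell p \<Longrightarrow> iperm [(AX, PInf, 1), (AY, (Pos r), 1), (AX, (Pos s), 1), (AY, (Pos r), 3), (AX, PInf, 3), (AY, (Pos r), 1), (AX, (Pos s), 3), (AY, (Pos r), 3)] p = cyc3 ((Pos s), NInf, (Neg r)) (PInf, (Pos r), (Pos s)) (PInf, (Pos s), (Neg r)) p" by (rule base_gen[OF rs])
  have d: "((Pos s), NInf, (Neg r)) \<noteq> (PInf, (Pos r), (Pos s))" "(PInf, (Pos r), (Pos s)) \<noteq> (PInf, (Pos s), (Neg r))" "((Pos s), NInf, (Neg r)) \<noteq> (PInf, (Pos s), (Neg r))" using rs by auto
  have B1: "\<And>p. is_cell p \<Longrightarrow> iperm [(AX, PInf, 1), (AY, (Pos r), 1), (AX, (Pos s), 1), (AY, (Pos r), 3), (AX, PInf, 3), (AY, (Pos r), 1), (AX, (Pos s), 3), (AY, (Pos r), 3)] p = cyc3 (PInf, (Pos r), (Pos s)) (PInf, (Pos s), (Neg r)) ((Pos s), NInf, (Neg r)) p" using B0 cyc3_rot[OF d] by metis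
  have B2: "\<And>p. is_cell p \<Longrightarrow> iperm [(AX, PInf, 1), (AY, (Pos r), 1), (AX, (Pos s), 1), (AY, (Pos r), 3), (AX, PInf, 3), (AY, (Pos r), 1), (AX, (Pos s), 3), (AY, (Pos r), 3)] p = cyc3 (PInf, (Pos s), (Neg r)) ((Pos s), NInf, (Neg r)) (PInf, (Pos r), (Pos s)) p" using B1 cyc3_rot[of "(PInf, (Pos r), (Pos s))" "(PInf, (Pos s), (Neg r))" "((Pos s), NInf, (Neg r))"] d by metis
  have x0: "Rc (Pos r) (Pos s) (cyc3 ((Pos r), (Pos s), PInf) ((Pos s), NInf, (Neg r)) (NInf, (Neg r), (Pos s)))" using Rc_conj[OF aB B2, of "[(AZ, (Pos s), 2), (AY, (Pos s), 1)]"] rs by (simp add: allowed_def)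
  have x1: "Rc (Pos r) (Pos s) (cyc3 ((Pos r), (Pos s), PInf) ((Pos s), NInf, (Neg r)) (NInf, (Neg s), (Neg r)))" using Rc_conj[OF aB B1, of "[(AZ, (Neg r), 1), (AZ, PInf, 1), (AY, (Pos r), 1)]"] rs by (simp add: allowed_def)
  have x2: "Rc (Pos r) (Pos s) (cyc3 ((Pos r), (Pos s), PInf) ((Pos s), NInf, (Neg r)) (NInf, (Pos r), (Neg s)))" using Rc_conj[OF aB B2, of "[(AY, (Pos s), 1), (AY, (Pos r), 2)]"] rs by (simp add: allowed_def)
  have x3: "Rc (Pos r) (Pos s) (cyc3 ((Pos r), (Pos s), PInf) ((Pos s), NInf, (Neg r)) (NInf, (Pos s), (Pos r)))" using Rc_conj[OF aB B2, of "[(AY, (Pos s), 1), (AZ, PInf, 1), (AY, (Pos r), 1)]"] rs by (simp add: allowed_def)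
  have x4: "Rc (Pos r) (Pos s) (cyc3 ((Pos r), (Pos s), PInf) ((Pos s), NInf, (Neg r)) (PInf, (Neg r), (Neg s)))" using Rc_conj[OF aB B2, of "[(AX, PInf, 2), (AY, (Pos s), 1)]"] rs by (simp add: allowed_def)
  have x5: "Rc (Pos r) (Pos s) (cyc3 ((Pos r), (Pos s), PInf) ((Pos s), NInf, (Neg r)) (PInf, (Neg s), (Pos r)))" using Rc_conj[OF aB B2, of "[(AX, PInf, 3), (AY, (Pos s), 1)]"] rs by (simp add: allowed_def)
  have x6: "Rc (Pos r) (Pos s) (cyc3 ((Pos r), (Pos s), PInf) ((Pos s), NInf, (Neg r)) (PInf, (Pos r), (Pos s)))" using Rc_conj[OF aB B2, of "[(AY, (Pos s), 1)]"] rs by (simp add: allowed_def)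
  have x7: "Rc (Pos r) (Pos s) (cyc3 ((Pos r), (Pos s), PInf) ((Pos s), NInf, (Neg r)) (PInf, (Pos s), (Neg r)))" using Rc_conj[OF aB B2, of "[(AX, PInf, 1), (AY, (Pos s), 1)]"] rs by (simp add: allowed_def)
  have x8: "Rc (Pos r) (Pos s) (cyc3 ((Pos r), (Pos s), PInf) ((Pos s), NInf, (Neg r)) ((Neg r), NInf, (Neg s)))" using Rc_conj[OF aB B2, of "[(AZ, (Neg s), 3), (AY, (Pos s), 1), (AY, (Pos r), 2)]"] rs by (simp add: allowed_def)
  have x9: "Rc (Pos r) (Pos s) (cyc3 ((Pos r), (Pos s), PInf) ((Pos s), NInf, (Neg r)) ((Neg r), PInf, (Pos s)))" using Rc_conj[OF aB B2, of "[(AZ, (Pos s), 3), (AY, (Pos s), 1)]"] rs by (simp add: allowed_def)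
  have x10: "Rc (Pos r) (Pos s) (cyc3 ((Pos r), (Pos s), PInf) ((Pos s), NInf, (Neg r)) ((Neg r), (Neg s), PInf))" using Rc_conj[OF aB B2, of "[(AY, (Pos s), 1), (AZ, PInf, 3), (AY, (Pos r), 1)]"] rs by (simp add: allowed_def)
  have x11: "Rc (Pos r) (Pos s) (cyc3 ((Pos r), (Pos s), PInf) ((Pos s), NInf, (Neg r)) ((Neg r), (Pos s), NInf))" using Rc_conj[OF aB B2, of "[(AY, (Pos s), 1), (AX, NInf, 3), (AY, (Pos r), 2)]"] rs by (simp add: allowed_def)
  have x12: "Rc (Pos r) (Pos s) (cyc3 ((Pos r), (Pos s), PInf) ((Pos s), NInf, (Neg r)) ((Neg s), NInf, (Pos r)))" using Rc_conj[OF aB B2, of "[(AY, (Pos s), 1), (AX, (Neg s), 3), (AY, (Pos r), 1)]"] rs by (simp add: allowed_def)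
  have x13: "Rc (Pos r) (Pos s) (cyc3 ((Pos r), (Pos s), PInf) ((Pos s), NInf, (Neg r)) ((Neg s), PInf, (Neg r)))" using Rc_conj[OF aB B2, of "[(AY, (Pos s), 1), (AX, (Neg s), 1), (AY, (Pos r), 1)]"] rs by (simp add: allowed_def)
  have x14: "Rc (Pos r) (Pos s) (cyc3 ((Pos r), (Pos s), PInf) ((Pos s), NInf, (Neg r)) ((Neg s), (Neg r), NInf))" using Rc_conj[OF aB B2, of "[(AY, (Pos s), 1), (AX, (Neg s), 2), (AY, (Pos r), 1)]"] rs by (simp add: allowed_def)
  have x15: "Rc (Pos r) (Pos s) (cyc3 ((Pos r), (Pos s), PInf) ((Pos s), NInf, (Neg r)) ((Neg s), (Pos r), PInf))" using Rc_conj[OF aB B2, of "[(AY, (Pos s), 1), (AY, (Pos r), 1)]"] rs by (simp add: allowed_def)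
  have x16: "Rc (Pos r) (Pos s) (cyc3 ((Pos r), (Pos s), PInf) ((Pos s), NInf, (Neg r)) ((Pos r), NInf, (Pos s)))" using Rc_conj[OF aB B2, of "[(AZ, (Pos s), 1), (AY, (Pos s), 1)]"] rs by (simp add: allowed_def)
  have x17: "Rc (Pos r) (Pos s) (cyc3 ((Pos r), (Pos s), PInf) ((Pos s), NInf, (Neg r)) ((Pos r), PInf, (Neg s)))" using Rc_conj[OF aB B2, of "[(AZ, (Neg s), 1), (AY, (Pos s), 1), (AY, (Pos r), 2)]"] rs by (simp add: allowed_def)
  have x18: "Rc (Pos r) (Pos s) (cyc3 ((Pos r), (Pos s), PInf) ((Pos s), NInf, (Neg r)) ((Pos r), (Neg s), NInf))" using Rc_conj[OF aB B2, of "[(AZ, NInf, 1), (AY, (Pos s), 1), (AY, (Pos r), 3)]"] rs by (simp add: allowed_def)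
  have x19: "Rc (Pos r) (Pos s) (cyc3 ((Pos r), (Pos s), PInf) ((Pos s), NInf, (Neg r)) ((Pos s), PInf, (Pos r)))" using Rc_conj[OF aB B2, of "[(AZ, (Pos r), 3), (AX, PInf, 3), (AY, (Pos s), 1)]"] rs by (simp add: allowed_def)
  have x20: "Rc (Pos r) (Pos s) (cyc3 ((Pos r), (Pos s), PInf) ((Pos s), NInf, (Neg r)) ((Pos s), (Neg r), PInf))" using Rc_conj[OF aB B2, of "[(AY, (Pos s), 1), (AZ, PInf, 2), (AY, (Pos r), 1)]"] rs by (simp add: allowed_def)
  have x21: "Rc (Pos r) (Pos s) (cyc3 ((Pos r), (Pos s), PInf) ((Pos s), NInf, (Neg r)) ((Pos s), (Pos r), NInf))" using Rc_conj[OF aB B2, of "[(AY, (Pos s), 1), (AY, (Pos r), 3)]"] rs by (simp add: allowed_def)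
  show ?thesis using x0 x1 x2 x3 x4 x5 x6 x7 x8 x9 x10 x11 x12 x13 x14 x15 x16 x17 x18 x19 x20 x21 by simp
qed

lemma good_gen:
  assumes rs: "r \<noteq> s"
  shows "good (Pos r) (Pos s) (cluster ((Pos r), (Pos s), PInf))"
proof -
  have E: "cluster ((Pos r), (Pos s), PInf) = S_gen r s" by (rule S_gen_eq[OF rs])
  have fin: "finite (S_gen r s)" by (simp add: S_gen_def)
  have cells: "\<forall>d\<in>S_gen r s. is_cell d" by (auto simp: S_gen_def is_cell_def is_inf_def)
  have clos: "\<forall>d\<in>S_gen r s. \<forall>i a. qturn i a d \<in> S_gen r s" by (simp add: S_gen_clos[OF rs])
  have part: "\<forall>d\<in>S_gen r s. \<exists>d'\<in>S_gen r s. d' \<noteq> d \<and> f_solved d' = f_solved d"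
  proof
    fix d assume "d \<in> S_gen r s"
    then have "prt d \<in> S_gen r s \<and> prt d \<noteq> d \<and> f_solved (prt d) = f_solved d"
      using rs unfolding S_gen_def by (elim insertE emptyE; simp add: prt_def f_solved_def is_cell_def is_inf_def)
    then show "\<exists>d'\<in>S_gen r s. d' \<noteq> d \<and> f_solved d' = f_solved d" by blast
  qed
  have ab: "((Pos r), (Pos s), PInf) \<in> S_gen r s" "((Pos s), NInf, (Neg r)) \<in> S_gen r s" "((Pos r), (Pos s), PInf) \<noteq> ((Pos s), NInf, (Neg r))" using rs by (auto simp: S_gen_def)
  have bs: "\<And>x. x \<in> S_gen r s \<Longrightarrow> x \<noteq> ((Pos r), (Pos s), PInf) \<Longrightarrow> x \<noteq> ((Pos s), NInf, (Neg r)) \<Longrightarrow> cyc3 ((Pos r), (Pos s), PInf) ((Pos s), NInf, (Neg r)) x \<in> {V. Rc (Pos r) (Pos s) V}"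
    using cj_gen[OF rs] unfolding S_gen_def mem_Collect_eq by (elim insertE emptyE; simp)
  have es: "(NInf, (Neg r), (Pos s)) \<in> S_gen r s" "(NInf, (Neg s), (Neg r)) \<in> S_gen r s" "(NInf, (Pos r), (Neg s)) \<in> S_gen r s" by (auto simp: S_gen_def)
  have ed: "distinct [((Pos r), (Pos s), PInf), ((Pos s), NInf, (Neg r)), (NInf, (Neg r), (Pos s)), (NInf, (Neg s), (Neg r)), (NInf, (Pos r), (Neg s))]" using rs by auto
  have five: "\<And>y z. \<exists>w\<in>S_gen r s. w \<notin> {((Pos r), (Pos s), PInf), ((Pos s), NInf, (Neg r)), y, z}"
    using five_aux[OF es ed] .
  have cy: "\<forall>x\<in>S_gen r s. \<forall>y\<in>S_gen r s. \<forall>z\<in>S_gen r s. x \<noteq> y \<longrightarrow> y \<noteq> z \<longrightarrow> x \<noteq> z \<longrightarrow> Rc (Pos r) (Pos s) (cyc3 x y z)"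
  proof (intro ballI impI)
    have cmp: "\<And>V W. V \<in> {V. Rc (Pos r) (Pos s) V} \<Longrightarrow> W \<in> {V. Rc (Pos r) (Pos s) V} \<Longrightarrow> V \<circ> W \<in> {V. Rc (Pos r) (Pos s) V}" by (simp add: Rc_comp)
    fix x y z assume asm: "x \<in> S_gen r s" "y \<in> S_gen r s" "z \<in> S_gen r s" "x \<noteq> y" "y \<noteq> z" "x \<noteq> z"
    have "cyc3 x y z \<in> {V. Rc (Pos r) (Pos s) V}" by (rule all3[OF cmp ab bs five asm])
    then show "Rc (Pos r) (Pos s) (cyc3 x y z)" by simp
  qed
  show ?thesis unfolding good_def E by (intro conjI fin cells clos part cy)
qed


theorem lemma5p3:
  fixes f :: "'a config" and c :: "'a point" and C :: "'a point set"
    and \<alpha> \<beta> :: "'a coord"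
  assumes "infinite (UNIV :: 'a set)"
    and "legal f"
    and "accessible TYPE('i::wellorder) f_solved f"
    and "is_cell c" and "C = cluster c" and "C \<noteq> center_cluster"
    and "(\<alpha>, \<beta>, PInf) \<in> C"
    and "\<alpha> \<in> range Pos" and "\<beta> \<in> insert Zero (range Pos)"
  shows "\<exists>s. (\<forall>\<sigma>\<in>set s. is_face_twist \<sigma> \<or>
               (\<exists>i \<gamma> j. \<gamma> \<in> {\<alpha>, cneg \<alpha>, \<beta>, cneg \<beta>} \<and> j \<in> {1,2,3} \<and>
                        \<sigma> = basic_twist_of i \<gamma> j)) \<and>
             (\<forall>d\<in>C. apply_seq s f d = f_solved d) \<and>
             (\<forall>d. is_cell d \<and> d \<notin> C \<longrightarrow> apply_seq s f d = f d)"
proof -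
  obtain r where r: "\<alpha> = Pos r" using assms(8) by auto
  have m: "(\<alpha>, \<beta>, PInf) \<in> cluster c" using assms(5,7) by simp
  have cc: "C = cluster (\<alpha>, \<beta>, PInf)"
  proof
    show "C \<subseteq> cluster (\<alpha>, \<beta>, PInf)"
      using assms(5) cluster_trans[OF cluster_sym[OF m]] by blast
    show "cluster (\<alpha>, \<beta>, PInf) \<subseteq> C"
      using assms(5) cluster_trans[OF m] by blast
  qed
  have g: "good \<alpha> \<beta> C"
  proof (cases "\<beta> = Zero")
    case True
    then show ?thesis using good_zero[of r] r cc by simp
  next
    case False
    then obtain r' where r': "\<beta> = Pos r'" using assms(9) by auto
    show ?thesis
    proof (cases "r' = r")
      case True
      then show ?thesis using good_eq[of r] r r' cc by simp
    next
      case False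
      then have "r \<noteq> r'" by simp
      then show ?thesis using good_gen[of r r'] r r' cc by simp
    qed
  qed
  show ?thesis by (rule main_generic[OF g assms(2) assms(3)])
qed

end
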